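(* Let $f,g\in\mathrm{SL}_3(\mathbb{R})$ satisfy: (1) $f$ has one-dimensional eigenspaces $E^u,E^c,E^s$ with eigenvalues of moduli $\lambda_u>\lambda_c>\lambda_s$; (2) there exist a positive integer $m$ and $\mu>1$ such that $P_0:=\ker(g^m-\mu\,\mathrm{id})$ is two-dimensional and $L_0:=\ker(g^m-\mu^{-2}\mathrm{id})$ is one-dimensional; (3) $E^u,E^c,E^s\not\subset P_0$, $L_0\not\subset E^{cu}:=E^u\oplus E^c$ and $L_0\not\subset E^{cs}:=E^s\oplus E^c$; (4) for all $0\le k<m$, $g^k((E^u\oplus L_0)\cap P_0)\not\subset E^{cs}\cup E^{cu}$ and $g^k((E^s\oplus L_0)\cap P_0)\not\subset E^{cs}\cup E^{cu}$. Then there exists $n_0$ such that $F_n:=\{f^n,f^{-n},g^n,g^{-n}\}$ satisfies condition $(\ast)$ for all $n>n_0$.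
   Context: For $g\in\mathrm{SL}_3(\mathbb{R})$ and a line $L\in\mathbb{RP}^2$, $\|g|_L\|:=\|gv\|/\|v\|$ for non-zero $v\in L$. A finite symmetric set $F\subset\mathrm{SL}_3(\mathbb{R})$ satisfies condition $(\ast)$ if there exist $c>1$, a line $L_0'\in\mathbb{RP}^2$, and for each $h\in F$ a subset $C_h\subset\mathbb{RP}^2$ such that: (i) $C_h\cap C_{h'}=\emptyset$ if $h\ne h'$; (ii) $L_0'\notin\bigcup_{h\in F}C_h$; (iii) $h\cdot L_0'\in C_h$ for all $h\in F$; (iv) $h\cdot C_{h'}\subset C_h$ whenever $h\neq h'^{-1}$; (v) $\|h|_L\|\ge c$ for all $L\in\bigcup_{h'\ne h^{-1}}C_{h'}$. *)

theory Defs
  imports "HOL-Analysis.Analysis"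
begin

type_synonym mat3 = "real^3^3"
type_synonym vec3 = "real^3"

primrec mpow :: "mat3 \<Rightarrow> nat \<Rightarrow> mat3" where
  "mpow A 0 = mat 1"
| "mpow A (Suc n) = A ** mpow A n"

definition SL3 :: "mat3 set" where
  "SL3 = {A. det A = 1}"

definition RP2 :: "vec3 set set" where
  "RP2 = {L. subspace L \<and> dim L = 1}"

definition act :: "mat3 \<Rightarrow> vec3 set \<Rightarrow> vec3 set" where
  "act g L = (\<lambda>v. g *v v) ` L"

definition restr_norm :: "mat3 \<Rightarrow> vec3 set \<Rightarrow> real" where
  "restr_norm g L = (let v = (SOME v. v \<in> L \<and> v \<noteq> 0) in norm (g *v v) / norm v)"

definition dsum :: "vec3 set \<Rightarrow> vec3 set \<Rightarrow> vec3 set" where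
  "dsum U V = {u + v | u v. u \<in> U \<and> v \<in> V}"

definition eigsp :: "mat3 \<Rightarrow> real \<Rightarrow> vec3 set" where
  "eigsp A a = {v. A *v v = a *\<^sub>R v}"

definition cond_star :: "mat3 set \<Rightarrow> bool" where
  "cond_star F \<longleftrightarrow>
    (\<exists>c > 1. \<exists>L0' \<in> RP2. \<exists>C :: mat3 \<Rightarrow> vec3 set set.
       (\<forall>h\<in>F. C h \<subseteq> RP2) \<and>
       (\<forall>h\<in>F. \<forall>h'\<in>F. h \<noteq> h' \<longrightarrow> C h \<inter> C h' = {}) \<and>
       L0' \<notin> (\<Union>h\<in>F. C h) \<and>
       (\<forall>h\<in>F. act h L0' \<in> C h) \<and>
       (\<forall>h\<in>F. \<forall>h'\<in>F. h \<noteq> matrix_inv h' \<longrightarrow> act h ` C h' \<subseteq> C h) \<and>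
       (\<forall>h\<in>F. \<forall>L \<in> (\<Union>h'\<in>{h'\<in>F. h' \<noteq> matrix_inv h}. C h'). restr_norm h L \<ge> c))"

end

theory Submission
  imports Defs
begin

definition homog :: "(vec3 \<Rightarrow> bool) \<Rightarrow> bool" where
  "homog Q \<longleftrightarrow> (\<forall>v r. Q v \<longrightarrow> r \<noteq> 0 \<longrightarrow> Q (r *\<^sub>R v))"

definition CC :: "(vec3 \<Rightarrow> bool) \<Rightarrow> vec3 set set" where
  "CC Q = {L. \<exists>v. v \<noteq> 0 \<and> L = span {v} \<and> Q v}"

lemma RP2_iff: "L \<in> RP2 \<longleftrightarrow> (\<exists>v. v \<noteq> 0 \<and> L = span {v})"
proof
  assume "L \<in> RP2"
  then have s: "subspace L" and d: "dim L = 1" by (auto simp: RP2_def)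
  obtain B where B: "B \<subseteq> L" "independent B" "L \<subseteq> span B" "card B = dim L"
    using basis_exists by blast
  then obtain v where "B = {v}" using d by (metis card_1_singletonE)
  moreover have "span B \<subseteq> L" using B(1) s by (simp add: span_minimal)
  ultimately show "\<exists>v. v \<noteq> 0 \<and> L = span {v}"
    using B by (metis dependent_zero insertI1 subset_antisym)
next
  assume "\<exists>v. v \<noteq> 0 \<and> L = span {v}"
  then obtain v where "v \<noteq> 0" "L = span {v}" by blast
  then show "L \<in> RP2" by (simp add: RP2_def dim_span)
qed

lemma span_single_elem:
  assumes "u \<in> span {v}" "u \<noteq> 0"
  shows "\<exists>r. r \<noteq> 0 \<and> u = r *\<^sub>R v"
  using assms by (auto simp: span_singleton)

lemma CC_elem:
  assumes "homog Q" "L \<in> CC Q" "u \<in> L" "u \<noteq> 0"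
  shows "Q u"
proof -
  obtain v where v: "v \<noteq> 0" "L = span {v}" "Q v" using assms(2) by (auto simp: CC_def)
  obtain r where "r \<noteq> 0" "u = r *\<^sub>R v" using span_single_elem assms(3,4) v by blast
  then show ?thesis using assms(1) v by (simp add: homog_def)
qed

lemma CC_RP2: "CC Q \<subseteq> RP2"
  by (auto simp: CC_def RP2_iff)

lemma act_span: "act h (span {v}) = span {h *v v}"
  by (simp add: act_def span_linear_image[symmetric])

lemma matrix_inv_unique:
  fixes A B :: mat3
  assumes "A ** B = mat 1" "B ** A = mat 1"
  shows "matrix_inv A = B"
proof -
  have ex: "\<exists>X::mat3. A ** X = mat 1 \<and> X ** A = mat 1" using assms by blast
  define X where "X = matrix_inv A"
  have X: "A ** X = mat 1 \<and> X ** A = mat 1"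
    unfolding X_def matrix_inv_def using someI_ex[OF ex] by simp
  have "X = X ** (A ** B)" using assms by (simp add: matrix_mul_rid)
  also have "\<dots> = (X ** A) ** B" by (simp add: matrix_mul_assoc)
  also have "\<dots> = B" using X by (simp add: matrix_mul_lid)
  finally show ?thesis by (simp add: X_def)
qed

lemma pingpong:
  fixes a ai b bi :: mat3 and Qa Qai Qb Qbi :: "vec3 \<Rightarrow> bool" and w :: vec3 and c :: real
  assumes inv: "a ** ai = mat 1" "ai ** a = mat 1" "b ** bi = mat 1" "bi ** b = mat 1"
    and aidef: "ai = matrix_inv a" and bidef: "bi = matrix_inv b"
    and hom: "homog Qa" "homog Qai" "homog Qb" "homog Qbi"
    and d1: "\<And>v. Qa v \<Longrightarrow> Qai v \<Longrightarrow> v = 0"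
    and d2: "\<And>v. Qa v \<Longrightarrow> Qb v \<Longrightarrow> v = 0"
    and d3: "\<And>v. Qa v \<Longrightarrow> Qbi v \<Longrightarrow> v = 0"
    and d4: "\<And>v. Qai v \<Longrightarrow> Qb v \<Longrightarrow> v = 0"
    and d5: "\<And>v. Qai v \<Longrightarrow> Qbi v \<Longrightarrow> v = 0"
    and d6: "\<And>v. Qb v \<Longrightarrow> Qbi v \<Longrightarrow> v = 0"
    and w0: "w \<noteq> 0" and wn: "\<not> Qa w" "\<not> Qai w" "\<not> Qb w" "\<not> Qbi w"
    and wh: "Qa (a *v w)" "Qai (ai *v w)" "Qb (b *v w)" "Qbi (bi *v w)"
    and ma: "\<And>v. v \<noteq> 0 \<Longrightarrow> Qa v \<or> Qb v \<or> Qbi v \<Longrightarrow> Qa (a *v v) \<and> norm (a *v v) \<ge> c * norm v"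
    and mai: "\<And>v. v \<noteq> 0 \<Longrightarrow> Qai v \<or> Qb v \<or> Qbi v \<Longrightarrow> Qai (ai *v v) \<and> norm (ai *v v) \<ge> c * norm v"
    and mb: "\<And>v. v \<noteq> 0 \<Longrightarrow> Qb v \<or> Qa v \<or> Qai v \<Longrightarrow> Qb (b *v v) \<and> norm (b *v v) \<ge> c * norm v"
    and mbi: "\<And>v. v \<noteq> 0 \<Longrightarrow> Qbi v \<or> Qa v \<or> Qai v \<Longrightarrow> Qbi (bi *v v) \<and> norm (bi *v v) \<ge> c * norm v"
    and c1: "c > 1"
  shows "cond_star {a, ai, b, bi}"
proof -
  have injz: "\<And>h hi v. hi ** h = mat 1 \<Longrightarrow> h *v v = 0 \<Longrightarrow> v = 0"
    by (metis matrix_vector_mul_assoc matrix_vector_mul_lid matrix_vector_mult_0_right)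
  have aw: "a *v w \<noteq> 0" using injz[OF inv(2)] w0 by blast
  have aiw: "ai *v w \<noteq> 0" using injz[OF inv(1)] w0 by blast
  have bw: "b *v w \<noteq> 0" using injz[OF inv(4)] w0 by blast
  have biw: "bi *v w \<noteq> 0" using injz[OF inv(3)] w0 by blast
  have n1: "a \<noteq> ai" using d1 aw wh by metis
  have n2: "a \<noteq> b" using d2 aw wh by metis
  have n3: "a \<noteq> bi" using d3 aw wh by metis
  have n4: "ai \<noteq> b" using d4 aiw wh by metis
  have n5: "ai \<noteq> bi" using d5 aiw wh by metis
  have n6: "b \<noteq> bi" using d6 bw wh by metis
  have ia: "matrix_inv a = ai" using aidef by simp
  have iai: "matrix_inv ai = a" using matrix_inv_unique inv by blast
  have ib: "matrix_inv b = bi" using bidef by simp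
  have ibi: "matrix_inv bi = b" using matrix_inv_unique inv by blast
  define Qf where "Qf h = (if h = a then Qa else if h = ai then Qai else if h = b then Qb else Qbi)" for h
  define C where "C h = CC (Qf h)" for h
  have Qfa: "Qf a = Qa" "Qf ai = Qai" "Qf b = Qb" "Qf bi = Qbi"
    using n1 n2 n3 n4 n5 n6 by (auto simp: Qf_def)
  have homf: "\<And>h. homog (Qf h)" using hom by (simp add: Qf_def)
  have disjC: "CC P \<inter> CC R = {}" if "homog P" "homog R" "\<And>v. P v \<Longrightarrow> R v \<Longrightarrow> v = 0" for P R
  proof (rule ccontr)
    assume "CC P \<inter> CC R \<noteq> {}"
    then obtain L where L: "L \<in> CC P" "L \<in> CC R" by blast
    then obtain v where v: "v \<noteq> 0" "L = span {v}" by (auto simp: CC_def)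
    have "v \<in> L" using v by (simp add: span_base)
    then show False using CC_elem[OF that(1) L(1)] CC_elem[OF that(2) L(2)] that(3) v(1) by blast
  qed
  define L0 where "L0 = span {w}"
  have L0: "L0 \<in> RP2" using w0 RP2_iff L0_def by blast
  have notin: "L0 \<notin> CC P" if "homog P" "\<not> P w" for P
    using CC_elem[OF that(1), of L0 w] that(2) w0 by (auto simp: L0_def span_base)
  have actin: "act h L0 \<in> CC P" if "P (h *v w)" "h *v w \<noteq> 0" for h P
    using that by (auto simp: act_span L0_def CC_def)
  have mapC: "act h ` CC R \<subseteq> CC P"
    if hR: "homog R" and hm: "\<And>v. v \<noteq> 0 \<Longrightarrow> R v \<Longrightarrow> P (h *v v) \<and> h *v v \<noteq> 0" for h P R
  proof
    fix L' assume "L' \<in> act h ` CC R"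
    then obtain L where L: "L \<in> CC R" "L' = act h L" by blast
    then obtain v where v: "v \<noteq> 0" "L = span {v}" "R v" by (auto simp: CC_def)
    then show "L' \<in> CC P" using hm[OF v(1,3)] L(2) by (auto simp: act_span CC_def)
  qed
  have normC: "restr_norm h L \<ge> c"
    if hR: "homog R" and hL: "L \<in> CC R" and hn: "\<And>v. v \<noteq> 0 \<Longrightarrow> R v \<Longrightarrow> norm (h *v v) \<ge> c * norm v" for h R L
  proof -
    obtain v where v: "v \<noteq> 0" "L = span {v}" using hL by (auto simp: CC_def)
    have ex: "\<exists>u. u \<in> L \<and> u \<noteq> 0" using v by (auto intro: span_base)
    define u where "u = (SOME u. u \<in> L \<and> u \<noteq> 0)"
    have u: "u \<in> L" "u \<noteq> 0" using someI_ex[OF ex] by (auto simp: u_def)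
    have "R u" using CC_elem[OF hR hL u] .
    then have "norm (h *v u) \<ge> c * norm u" using hn u by blast
    then have "norm (h *v u) / norm u \<ge> c" using u by (simp add: field_simps)
    then show ?thesis by (simp add: restr_norm_def u_def[symmetric] Let_def)
  qed
  have D: "CC Qa \<inter> CC Qai = {}" "CC Qa \<inter> CC Qb = {}" "CC Qa \<inter> CC Qbi = {}"
      "CC Qai \<inter> CC Qb = {}" "CC Qai \<inter> CC Qbi = {}" "CC Qb \<inter> CC Qbi = {}"
    using disjC hom d1 d2 d3 d4 d5 d6 by blast+
  have nza: "a *v v \<noteq> 0" "ai *v v \<noteq> 0" "b *v v \<noteq> 0" "bi *v v \<noteq> 0" if "v \<noteq> 0" for v
    using injz[OF inv(2)] injz[OF inv(1)] injz[OF inv(4)] injz[OF inv(3)] that by blast+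
  have M: "act a ` CC Qa \<subseteq> CC Qa" "act a ` CC Qb \<subseteq> CC Qa" "act a ` CC Qbi \<subseteq> CC Qa"
    "act ai ` CC Qai \<subseteq> CC Qai" "act ai ` CC Qb \<subseteq> CC Qai" "act ai ` CC Qbi \<subseteq> CC Qai"
    "act b ` CC Qb \<subseteq> CC Qb" "act b ` CC Qa \<subseteq> CC Qb" "act b ` CC Qai \<subseteq> CC Qb"
    "act bi ` CC Qbi \<subseteq> CC Qbi" "act bi ` CC Qa \<subseteq> CC Qbi" "act bi ` CC Qai \<subseteq> CC Qbi"
    by (rule mapC, rule hom; simp add: ma mai mb mbi nza)+
  have Na: "c \<le> restr_norm a L" if "L \<in> CC Qa \<union> CC Qb \<union> CC Qbi" for L
    using that
  proof (elim UnE)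
    show ?thesis if "L \<in> CC Qa" by (rule normC[OF hom(1) that]) (simp add: ma)
    show ?thesis if "L \<in> CC Qb" by (rule normC[OF hom(3) that]) (simp add: ma)
    show ?thesis if "L \<in> CC Qbi" by (rule normC[OF hom(4) that]) (simp add: ma)
  qed
  have Nai: "c \<le> restr_norm ai L" if "L \<in> CC Qai \<union> CC Qb \<union> CC Qbi" for L
    using that
  proof (elim UnE)
    show ?thesis if "L \<in> CC Qai" by (rule normC[OF hom(2) that]) (simp add: mai)
    show ?thesis if "L \<in> CC Qb" by (rule normC[OF hom(3) that]) (simp add: mai)
    show ?thesis if "L \<in> CC Qbi" by (rule normC[OF hom(4) that]) (simp add: mai)
  qed
  have Nb: "c \<le> restr_norm b L" if "L \<in> CC Qb \<union> CC Qa \<union> CC Qai" for L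
    using that
  proof (elim UnE)
    show ?thesis if "L \<in> CC Qb" by (rule normC[OF hom(3) that]) (simp add: mb)
    show ?thesis if "L \<in> CC Qa" by (rule normC[OF hom(1) that]) (simp add: mb)
    show ?thesis if "L \<in> CC Qai" by (rule normC[OF hom(2) that]) (simp add: mb)
  qed
  have Nbi: "c \<le> restr_norm bi L" if "L \<in> CC Qbi \<union> CC Qa \<union> CC Qai" for L
    using that
  proof (elim UnE)
    show ?thesis if "L \<in> CC Qbi" by (rule normC[OF hom(4) that]) (simp add: mbi)
    show ?thesis if "L \<in> CC Qa" by (rule normC[OF hom(1) that]) (simp add: mbi)
    show ?thesis if "L \<in> CC Qai" by (rule normC[OF hom(2) that]) (simp add: mbi)
  qed
  show ?thesis
    unfolding cond_star_def
  proof (intro exI[of _ c] conjI c1 bexI[of _ L0] L0 exI[of _ C] ballI impI)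
    show "C h \<subseteq> RP2" for h by (simp add: C_def CC_RP2)
    show "C h \<inter> C h' = {}" if "h \<in> {a, ai, b, bi}" "h' \<in> {a, ai, b, bi}" "h \<noteq> h'" for h h'
      using that unfolding C_def
      by (elim insertE emptyE; simp add: Qfa D Int_commute)
    show "L0 \<notin> (\<Union>h\<in>{a, ai, b, bi}. C h)"
      using notin hom wn by (auto simp: C_def Qfa)
    show "act h L0 \<in> C h" if "h \<in> {a, ai, b, bi}" for h
      using that actin wh aw aiw bw biw by (auto simp: C_def Qfa)
    show "act h ` C h' \<subseteq> C h" if "h \<in> {a, ai, b, bi}" "h' \<in> {a, ai, b, bi}" "h \<noteq> matrix_inv h'" for h h'
      using that unfolding C_def ia iai ib ibi
      by (elim insertE emptyE; simp add: Qfa M n1 n2 n3 n4 n5 n6 ia iai ib ibi)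
    show "c \<le> restr_norm h L" if "h \<in> {a, ai, b, bi}" "L \<in> (\<Union>h'\<in>{h' \<in> {a, ai, b, bi}. h' \<noteq> matrix_inv h}. C h')" for h L
      using that unfolding C_def ia iai ib ibi
      by (elim insertE emptyE; auto simp: Qfa ia iai ib ibi n1 n2 n3 n4 n5 n6 intro: Na Nai Nb Nbi)
  qed
qed


lemma mpow_vec: "mpow A (Suc n) *v v = A *v (mpow A n *v v)"
  by (simp add: matrix_vector_mul_assoc)

lemma mpow_add: "mpow A (n + k) = mpow A n ** mpow A k"
  by (induction n) (simp_all add: matrix_mul_lid matrix_mul_assoc)

lemma mpow_comm: "A ** mpow A n = mpow A n ** A"
proof -
  have "mpow A (n + 1) = mpow A (1 + n)" by simp
  then show ?thesis by (simp only: mpow_add) (simp add: matrix_mul_rid)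
qed

lemma mpow_Suc': "mpow A (Suc n) = mpow A n ** A"
  using mpow_comm by simp

lemma det_mpow: "det (mpow A n) = det A ^ n"
  by (induction n) (simp_all add: det_mul det_I)

lemma coords3:
  fixes e1 e2 e3 :: vec3
  assumes ind: "\<And>a b c. a *\<^sub>R e1 + b *\<^sub>R e2 + c *\<^sub>R e3 = 0 \<Longrightarrow> a = 0 \<and> b = 0 \<and> c = 0"
  shows "\<exists>x1 x2 x3. linear x1 \<and> linear x2 \<and> linear x3 \<and>
     (\<forall>a b c. x1 (a *\<^sub>R e1 + b *\<^sub>R e2 + c *\<^sub>R e3) = a \<and> x2 (a *\<^sub>R e1 + b *\<^sub>R e2 + c *\<^sub>R e3) = b
        \<and> x3 (a *\<^sub>R e1 + b *\<^sub>R e2 + c *\<^sub>R e3) = c) \<and>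
     (\<forall>v. v = x1 v *\<^sub>R e1 + x2 v *\<^sub>R e2 + x3 v *\<^sub>R e3)"
proof -
  define B :: mat3 where "B = (\<chi> i j. if j = 1 then e1$i else if j = 2 then e2$i else e3$i)"
  have Bmul: "B *v y = y$1 *\<^sub>R e1 + y$2 *\<^sub>R e2 + y$3 *\<^sub>R e3" for y
    by (simp add: vec_eq_iff matrix_vector_mult_def B_def sum_3 mult.commute)
  have "\<forall>y. B *v y = 0 \<longrightarrow> y = 0"
  proof (intro allI impI)
    fix y assume "B *v y = 0"
    then have "y$1 = 0 \<and> y$2 = 0 \<and> y$3 = 0" using ind Bmul by metis
    then show "y = 0" by (simp add: vec_eq_iff forall_3)
  qed
  then obtain Bi where Bi: "Bi ** B = mat 1" using matrix_left_invertible_ker by blast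
  then have "invertible B" using invertible_left_inverse by blast
  then obtain Bi' where Bi': "B ** Bi' = mat 1" "Bi' ** B = mat 1" by (auto simp: invertible_def)
  have "Bi = Bi'"
    by (metis Bi Bi'(1) matrix_mul_assoc matrix_mul_lid matrix_mul_rid)
  then have BBi: "B ** Bi = mat 1" using Bi' by simp
  define x1 where "x1 = (\<lambda>v. (Bi *v v)$1)"
  define x2 where "x2 = (\<lambda>v. (Bi *v v)$2)"
  define x3 where "x3 = (\<lambda>v. (Bi *v v)$3)"
  have lin: "linear (\<lambda>v. (Bi *v v)$k)" for k
    by (rule linearI) (simp_all add: matrix_vector_right_distrib matrix_vector_mult_scaleR)
  have X1: "Bi *v (a *\<^sub>R e1 + b *\<^sub>R e2 + c *\<^sub>R e3) = (\<chi> i. if i = 1 then a else if i = 2 then b else c)" for a b c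
  proof -
    have "a *\<^sub>R e1 + b *\<^sub>R e2 + c *\<^sub>R e3 = B *v (\<chi> i. if i = 1 then a else if i = 2 then b else c)"
      by (simp add: Bmul)
    then show ?thesis by (simp add: matrix_vector_mul_assoc Bi)
  qed
  have X2: "v = x1 v *\<^sub>R e1 + x2 v *\<^sub>R e2 + x3 v *\<^sub>R e3" for v
  proof -
    have "v = B *v (Bi *v v)" by (simp add: matrix_vector_mul_assoc BBi)
    then show ?thesis by (simp add: Bmul x1_def x2_def x3_def)
  qed
  show ?thesis
    apply (rule exI[of _ x1], rule exI[of _ x2], rule exI[of _ x3])
    using lin X1 X2 by (simp add: x1_def x2_def x3_def)
qed

lemma det3:
  fixes e1 e2 e3 :: vec3 and f :: mat3
  assumes ind: "\<And>a b c. a *\<^sub>R e1 + b *\<^sub>R e2 + c *\<^sub>R e3 = 0 \<Longrightarrow> a = 0 \<and> b = 0 \<and> c = 0"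
    and ev: "f *v e1 = l1 *\<^sub>R e1" "f *v e2 = l2 *\<^sub>R e2" "f *v e3 = l3 *\<^sub>R e3"
  shows "det f = l1 * l2 * l3"
proof -
  define B :: mat3 where "B = (\<chi> i j. if j = 1 then e1$i else if j = 2 then e2$i else e3$i)"
  have Bmul: "B *v y = y$1 *\<^sub>R e1 + y$2 *\<^sub>R e2 + y$3 *\<^sub>R e3" for y
    by (simp add: vec_eq_iff matrix_vector_mult_def B_def sum_3 mult.commute)
  have "\<forall>y. B *v y = 0 \<longrightarrow> y = 0"
  proof (intro allI impI)
    fix y assume "B *v y = 0"
    then have "y$1 = 0 \<and> y$2 = 0 \<and> y$3 = 0" using ind Bmul by metis
    then show "y = 0" by (simp add: vec_eq_iff forall_3)
  qed
  then obtain Bi where Bi: "Bi ** B = mat 1" using matrix_left_invertible_ker by blast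
  then have "invertible B" using invertible_left_inverse by blast
  then have dB: "det B \<noteq> 0" using invertible_det_nz by blast
  define D :: mat3 where "D = (\<chi> i j. if i = j then (if i = 1 then l1 else if i = 2 then l2 else l3) else 0)"
  have Dmul: "D *v y = (\<chi> i. (if i = 1 then l1 else if i = 2 then l2 else l3) * y$i)" for y
    by (simp add: vec_eq_iff matrix_vector_mult_def D_def sum_3 forall_3)
  have "f ** B = B ** D"
  proof -
    have "(f ** B) *v y = (B ** D) *v y" for y
    proof -
      have "(f ** B) *v y = f *v (B *v y)" by (simp add: matrix_vector_mul_assoc)
      also have "\<dots> = y$1 *\<^sub>R (l1 *\<^sub>R e1) + y$2 *\<^sub>R (l2 *\<^sub>R e2) + y$3 *\<^sub>R (l3 *\<^sub>R e3)"
        by (simp only: Bmul matrix_vector_right_distrib matrix_vector_mult_scaleR ev)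
      also have "\<dots> = B *v (D *v y)" by (simp add: Bmul Dmul mult.commute)
      also have "\<dots> = (B ** D) *v y" by (simp add: matrix_vector_mul_assoc)
      finally show ?thesis .
    qed
    then show ?thesis using matrix_eq by blast
  qed
  then have "det f * det B = det B * det D" by (metis det_mul)
  moreover have "det D = l1 * l2 * l3"
  proof -
    have "det D = prod (\<lambda>i. D$i$i) (UNIV::3 set)" by (rule det_diagonal) (simp add: D_def)
    also have "\<dots> = l1 * l2 * l3" unfolding UNIV_3 by (simp add: D_def)
    finally show ?thesis .
  qed
  ultimately show ?thesis using dB by simp
qed


lemma linear_bound:
  fixes x :: "vec3 \<Rightarrow> real"
  assumes "linear x"
  shows "\<exists>K>0. \<forall>v. \<bar>x v\<bar> \<le> K * norm v"
proof -
  have "bounded_linear x" using assms linear_conv_bounded_linear by blast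
  then obtain K where "K > 0" "\<forall>v. norm (x v) \<le> norm v * K" using bounded_linear.pos_bounded by blast
  then show ?thesis by (auto simp: mult.commute)
qed

lemma linear_bound_vec:
  fixes x :: "vec3 \<Rightarrow> vec3"
  assumes "linear x"
  shows "\<exists>K>0. \<forall>v. norm (x v) \<le> K * norm v"
proof -
  have "bounded_linear x" using assms linear_conv_bounded_linear by blast
  then obtain K where "K > 0" "\<forall>v. norm (x v) \<le> norm v * K" using bounded_linear.pos_bounded by blast
  then show ?thesis by (auto simp: mult.commute)
qed

lemma subspace_eigsp: "subspace (eigsp A a)"
  unfolding subspace_def eigsp_def
  by (simp add: matrix_vector_right_distrib matrix_vector_mult_scaleR scaleR_right_distrib)

lemma eig_line:
  assumes "dim (eigsp A a) = 1"
  shows "\<exists>v. v \<noteq> 0 \<and> A *v v = a *\<^sub>R v \<and> eigsp A a = span {v}"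
proof -
  have "eigsp A a \<in> RP2" using assms subspace_eigsp by (simp add: RP2_def)
  then obtain v where v: "v \<noteq> 0" "eigsp A a = span {v}" using RP2_iff by blast
  then have "v \<in> eigsp A a" by (simp add: span_base)
  then show ?thesis using v by (auto simp: eigsp_def)
qed

lemma indep_eig:
  fixes f :: mat3
  assumes ev: "f *v e1 = l1 *\<^sub>R e1" "f *v e2 = l2 *\<^sub>R e2" "f *v e3 = l3 *\<^sub>R e3"
    and nz: "e1 \<noteq> 0" "e2 \<noteq> 0" "e3 \<noteq> 0"
    and d: "l1 \<noteq> l2" "l1 \<noteq> l3" "l2 \<noteq> l3"
    and z: "a *\<^sub>R e1 + b *\<^sub>R e2 + c *\<^sub>R e3 = 0"
  shows "a = 0 \<and> b = 0 \<and> c = 0"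
proof -
  define w0 where "w0 = a *\<^sub>R e1 + b *\<^sub>R e2 + c *\<^sub>R e3"
  have w1: "f *v w0 = (a * l1) *\<^sub>R e1 + (b * l2) *\<^sub>R e2 + (c * l3) *\<^sub>R e3"
    by (simp add: w0_def matrix_vector_right_distrib matrix_vector_mult_scaleR ev)
  have w2: "f *v (f *v w0) = (a * l1 * l1) *\<^sub>R e1 + (b * l2 * l2) *\<^sub>R e2 + (c * l3 * l3) *\<^sub>R e3"
    by (simp add: w1 matrix_vector_right_distrib matrix_vector_mult_scaleR ev)
  have w00: "w0 = 0" using z w0_def by simp
  have key: "((l1-y)*(l1-z)*a) *\<^sub>R e1 + ((l2-y)*(l2-z)*b) *\<^sub>R e2 + ((l3-y)*(l3-z)*c) *\<^sub>R e3 =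
     ((a * l1 * l1) *\<^sub>R e1 + (b * l2 * l2) *\<^sub>R e2 + (c * l3 * l3) *\<^sub>R e3)
     - (y + z) *\<^sub>R ((a * l1) *\<^sub>R e1 + (b * l2) *\<^sub>R e2 + (c * l3) *\<^sub>R e3)
     + (y * z) *\<^sub>R (a *\<^sub>R e1 + b *\<^sub>R e2 + c *\<^sub>R e3)" for y z
    unfolding vec_eq_iff by (simp add: algebra_simps)
  have key0: "((l1-y)*(l1-z)*a) *\<^sub>R e1 + ((l2-y)*(l2-z)*b) *\<^sub>R e2 + ((l3-y)*(l3-z)*c) *\<^sub>R e3 = 0" for y z
    using key[of y z] w1[symmetric] w2[symmetric] w00 unfolding w0_def by simp
  have e1: "((l1-l2)*(l1-l3)*a) *\<^sub>R e1 = 0" using key0[of l2 l3] by simp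
  have e2: "((l2-l1)*(l2-l3)*b) *\<^sub>R e2 = 0" using key0[of l1 l3] by simp
  have e3: "((l3-l1)*(l3-l2)*c) *\<^sub>R e3 = 0" using key0[of l1 l2] by simp
  show ?thesis using e1 e2 e3 nz d by simp
qed

locale S0 =
  fixes f g :: mat3 and au ac as :: real and m :: nat and \<mu> :: real
  assumes f_SL: "f \<in> SL3" and g_SL: "g \<in> SL3"
    and Eu: "dim (eigsp f au) = 1" and Ec: "dim (eigsp f ac) = 1" and Es: "dim (eigsp f as) = 1"
    and moduli: "\<bar>au\<bar> > \<bar>ac\<bar>" "\<bar>ac\<bar> > \<bar>as\<bar>"
    and m_pos: "m > 0" and mu: "\<mu> > 1"
    and P0: "dim (eigsp (mpow g m) \<mu>) = 2"
    and L0: "dim (eigsp (mpow g m) (\<mu> powr (-2))) = 1"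
    and cond3: "\<not> eigsp f au \<subseteq> eigsp (mpow g m) \<mu>"
               "\<not> eigsp f ac \<subseteq> eigsp (mpow g m) \<mu>"
               "\<not> eigsp f as \<subseteq> eigsp (mpow g m) \<mu>"
               "\<not> eigsp (mpow g m) (\<mu> powr (-2)) \<subseteq> dsum (eigsp f au) (eigsp f ac)"
               "\<not> eigsp (mpow g m) (\<mu> powr (-2)) \<subseteq> dsum (eigsp f as) (eigsp f ac)"
    and cond4: "\<forall>k<m. \<not> act (mpow g k)
                   (dsum (eigsp f au) (eigsp (mpow g m) (\<mu> powr (-2))) \<inter> eigsp (mpow g m) \<mu>)
                 \<subseteq> dsum (eigsp f as) (eigsp f ac) \<union> dsum (eigsp f au) (eigsp f ac)"
               "\<forall>k<m. \<not> act (mpow g k)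
                   (dsum (eigsp f as) (eigsp (mpow g m) (\<mu> powr (-2))) \<inter> eigsp (mpow g m) \<mu>)
                 \<subseteq> dsum (eigsp f as) (eigsp f ac) \<union> dsum (eigsp f au) (eigsp f ac)"
begin

lemma f_data:
  "\<exists>eu ec es xu xc xs.
     f *v eu = au *\<^sub>R eu \<and> eu \<noteq> 0 \<and> eigsp f au = span {eu} \<and>
     f *v ec = ac *\<^sub>R ec \<and> ec \<noteq> 0 \<and> eigsp f ac = span {ec} \<and>
     f *v es = as *\<^sub>R es \<and> es \<noteq> 0 \<and> eigsp f as = span {es} \<and>
     linear xu \<and> linear xc \<and> linear xs \<and>
     (\<forall>a b c. xu (a *\<^sub>R eu + b *\<^sub>R ec + c *\<^sub>R es) = a \<and> xc (a *\<^sub>R eu + b *\<^sub>R ec + c *\<^sub>R es) = b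
        \<and> xs (a *\<^sub>R eu + b *\<^sub>R ec + c *\<^sub>R es) = c) \<and>
     (\<forall>v. v = xu v *\<^sub>R eu + xc v *\<^sub>R ec + xs v *\<^sub>R es)"
proof -
  obtain eu where eu: "eu \<noteq> 0" "f *v eu = au *\<^sub>R eu" "eigsp f au = span {eu}" using eig_line[OF Eu] by blast
  obtain ec where ec: "ec \<noteq> 0" "f *v ec = ac *\<^sub>R ec" "eigsp f ac = span {ec}" using eig_line[OF Ec] by blast
  obtain es where es: "es \<noteq> 0" "f *v es = as *\<^sub>R es" "eigsp f as = span {es}" using eig_line[OF Es] by blast
  have d: "au \<noteq> ac" "au \<noteq> as" "ac \<noteq> as" using moduli by auto
  have ind: "\<And>a b c. a *\<^sub>R eu + b *\<^sub>R ec + c *\<^sub>R es = 0 \<Longrightarrow> a = 0 \<and> b = 0 \<and> c = 0"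
    using indep_eig[OF eu(2) ec(2) es(2) eu(1) ec(1) es(1) d] by blast
  obtain xu xc xs where x: "linear xu \<and> linear xc \<and> linear xs \<and>
     (\<forall>a b c. xu (a *\<^sub>R eu + b *\<^sub>R ec + c *\<^sub>R es) = a \<and> xc (a *\<^sub>R eu + b *\<^sub>R ec + c *\<^sub>R es) = b
        \<and> xs (a *\<^sub>R eu + b *\<^sub>R ec + c *\<^sub>R es) = c) \<and>
     (\<forall>v. v = xu v *\<^sub>R eu + xc v *\<^sub>R ec + xs v *\<^sub>R es)"
    using coords3[OF ind] by blast
  show ?thesis using eu ec es x by blast
qed

lemma det_f: "au * ac * as = 1"
proof -
  obtain eu ec es where eu: "eu \<noteq> 0" "f *v eu = au *\<^sub>R eu"
    and ec: "ec \<noteq> 0" "f *v ec = ac *\<^sub>R ec" and es: "es \<noteq> 0" "f *v es = as *\<^sub>R es"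
    using f_data by blast
  have d: "au \<noteq> ac" "au \<noteq> as" "ac \<noteq> as" using moduli by auto
  have ind: "\<And>a b c. a *\<^sub>R eu + b *\<^sub>R ec + c *\<^sub>R es = 0 \<Longrightarrow> a = 0 \<and> b = 0 \<and> c = 0"
    using indep_eig[OF eu(2) ec(2) es(2) eu(1) ec(1) es(1) d] by blast
  have "det f = au * ac * as" using det3[OF ind eu(2) ec(2) es(2)] .
  then show ?thesis using f_SL by (simp add: SL3_def)
qed

lemma au_gt1: "\<bar>au\<bar> > 1" and as_lt1: "\<bar>as\<bar> < 1" and as_nz: "as \<noteq> 0"
proof -
  define x y z where "x = \<bar>au\<bar>" "y = \<bar>ac\<bar>" "z = \<bar>as\<bar>"
  have p: "x * y * z = 1" using det_f unfolding x_y_z_def by (metis abs_mult abs_one)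
  have o: "x > y" "y > z" "z \<ge> 0" using moduli unfolding x_y_z_def by auto
  show "as \<noteq> 0" using det_f by auto
  show "\<bar>au\<bar> > 1"
  proof (rule ccontr)
    assume "\<not> \<bar>au\<bar> > 1"
    then have x1: "x \<le> 1" by (simp add: x_y_z_def)
    have "x * y \<le> 1" by (rule mult_le_one) (use x1 o in auto)
    then have "x * y * z \<le> 1 * z" by (rule mult_right_mono) (use o in auto)
    then show False using p o x1 by linarith
  qed
  show "\<bar>as\<bar> < 1"
  proof (rule ccontr)
    assume "\<not> \<bar>as\<bar> < 1"
    then have z1: "z \<ge> 1" by (simp add: x_y_z_def)
    have "1 * 1 \<le> x * y" by (rule mult_mono) (use z1 o in auto)
    then have "1 * 1 < x * y" using o z1 by (smt (verit) mult_less_cancel_left2 mult_nonneg_nonneg)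
    then have "1 * 1 < x * y * z" using z1 by (smt (verit) mult_le_cancel_left1)
    then show False using p by simp
  qed
qed

end


locale S1 = S0 +
  fixes eu ec es :: vec3 and xu xc xs :: "vec3 \<Rightarrow> real"
  assumes eu: "f *v eu = au *\<^sub>R eu" "eu \<noteq> 0" "eigsp f au = span {eu}"
    and ec: "f *v ec = ac *\<^sub>R ec" "ec \<noteq> 0" "eigsp f ac = span {ec}"
    and es: "f *v es = as *\<^sub>R es" "es \<noteq> 0" "eigsp f as = span {es}"
    and xlin: "linear xu" "linear xc" "linear xs"
    and xco: "\<And>a b c. xu (a *\<^sub>R eu + b *\<^sub>R ec + c *\<^sub>R es) = a"
             "\<And>a b c. xc (a *\<^sub>R eu + b *\<^sub>R ec + c *\<^sub>R es) = b"
             "\<And>a b c. xs (a *\<^sub>R eu + b *\<^sub>R ec + c *\<^sub>R es) = c"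
    and xdec: "\<And>v. v = xu v *\<^sub>R eu + xc v *\<^sub>R ec + xs v *\<^sub>R es"
begin

lemma mpow0: "mpow A 0 = mat 1" by simp

lemma ac_nz: "ac \<noteq> 0" and au_nz: "au \<noteq> 0"
  using moduli by auto

lemma f_vec: "f *v v = (au * xu v) *\<^sub>R eu + (ac * xc v) *\<^sub>R ec + (as * xs v) *\<^sub>R es"
proof -
  have "f *v v = f *v (xu v *\<^sub>R eu + xc v *\<^sub>R ec + xs v *\<^sub>R es)"
    by (rule arg_cong[where f="(*v) f"], rule xdec)
  then show ?thesis by (simp add: matrix_vector_right_distrib matrix_vector_mult_scaleR eu ec es mult.commute)
qed

lemma fx1: "xu (f *v v) = au * xu v" "xc (f *v v) = ac * xc v" "xs (f *v v) = as * xs v"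
  by (simp_all only: f_vec xco)

lemma fpow: "xu (mpow f n *v v) = au ^ n * xu v" "xc (mpow f n *v v) = ac ^ n * xc v"
     "xs (mpow f n *v v) = as ^ n * xs v"
  apply (induction n)
       apply (simp_all only: mpow_vec fx1)
  apply (simp_all add: matrix_vector_mul_lid)
  done

lemma finv:
  assumes "mpow f n ** A = mat 1"
  shows "xu (A *v v) = (1 / au) ^ n * xu v" "xc (A *v v) = (1 / ac) ^ n * xc v"
     "xs (A *v v) = (1 / as) ^ n * xs v"
proof -
  have v: "v = mpow f n *v (A *v v)" by (simp add: matrix_vector_mul_assoc assms matrix_vector_mul_lid)
  have "xu v = au ^ n * xu (A *v v)" "xc v = ac ^ n * xc (A *v v)" "xs v = as ^ n * xs (A *v v)"
    by (subst v, simp add: fpow)+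
  then show "xu (A *v v) = (1 / au) ^ n * xu v" "xc (A *v v) = (1 / ac) ^ n * xc v"
     "xs (A *v v) = (1 / as) ^ n * xs v"
    using au_nz ac_nz as_nz by (simp_all add: power_one_over field_simps)
qed

lemma xbound: "\<exists>K>0. \<forall>v. \<bar>xu v\<bar> \<le> K * norm v \<and> \<bar>xc v\<bar> \<le> K * norm v \<and> \<bar>xs v\<bar> \<le> K * norm v"
proof -
  obtain K1 where K1: "K1 > 0" "\<forall>v. \<bar>xu v\<bar> \<le> K1 * norm v" using linear_bound xlin(1) by blast
  obtain K2 where K2: "K2 > 0" "\<forall>v. \<bar>xc v\<bar> \<le> K2 * norm v" using linear_bound xlin(2) by blast
  obtain K3 where K3: "K3 > 0" "\<forall>v. \<bar>xs v\<bar> \<le> K3 * norm v" using linear_bound xlin(3) by blast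
  define K where "K = K1 + K2 + K3"
  have "\<bar>xu v\<bar> \<le> K * norm v \<and> \<bar>xc v\<bar> \<le> K * norm v \<and> \<bar>xs v\<bar> \<le> K * norm v" for v
  proof -
    have "K1 * norm v \<le> K * norm v" "K2 * norm v \<le> K * norm v" "K3 * norm v \<le> K * norm v"
      using K1 K2 K3 by (auto simp: K_def intro!: mult_right_mono)
    then show ?thesis using K1 K2 K3 by (meson order_trans)
  qed
  then show ?thesis using K1 K2 K3 K_def by (intro exI[of _ K]) auto
qed

lemma norm_le_coords: "\<exists>K>0. \<forall>v. norm v \<le> K * (\<bar>xu v\<bar> + \<bar>xc v\<bar> + \<bar>xs v\<bar>)"
proof -
  define K where "K = norm eu + norm ec + norm es + 1"
  have "norm v \<le> K * (\<bar>xu v\<bar> + \<bar>xc v\<bar> + \<bar>xs v\<bar>)" for v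
  proof -
    have "norm v = norm (xu v *\<^sub>R eu + xc v *\<^sub>R ec + xs v *\<^sub>R es)" using xdec[of v] by simp
    also have "\<dots> \<le> \<bar>xu v\<bar> * norm eu + \<bar>xc v\<bar> * norm ec + \<bar>xs v\<bar> * norm es"
      using norm_triangle_ineq[of "xu v *\<^sub>R eu + xc v *\<^sub>R ec" "xs v *\<^sub>R es"]
        norm_triangle_ineq[of "xu v *\<^sub>R eu" "xc v *\<^sub>R ec"] by simp
    also have "\<dots> \<le> \<bar>xu v\<bar> * K + \<bar>xc v\<bar> * K + \<bar>xs v\<bar> * K"
      by (intro add_mono mult_left_mono) (auto simp: K_def)
    finally show ?thesis by (simp add: algebra_simps)
  qed
  moreover have "K > 0" unfolding K_def by (smt (verit) norm_ge_zero)
  ultimately show ?thesis by blast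
qed

lemma x_lin_facts:
  "xu (v + w) = xu v + xu w" "xc (v + w) = xc v + xc w" "xs (v + w) = xs v + xs w"
  "xu (r *\<^sub>R v) = r * xu v" "xc (r *\<^sub>R v) = r * xc v" "xs (r *\<^sub>R v) = r * xs v"
  "xu 0 = 0" "xc 0 = 0" "xs 0 = 0"
  using xlin by (simp_all add: linear_add linear_scale linear_0)

lemma x_eu: "xu eu = 1" "xc eu = 0" "xs eu = 0"
  using xco[of 1 0 0] by simp_all
lemma x_ec: "xu ec = 0" "xc ec = 1" "xs ec = 0"
  using xco[of 0 1 0] by simp_all
lemma x_es: "xu es = 0" "xc es = 0" "xs es = 1"
  using xco[of 0 0 1] by simp_all

lemma dsum_sc: "dsum (eigsp f as) (eigsp f ac) = {v. xu v = 0}"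
proof
  show "dsum (eigsp f as) (eigsp f ac) \<subseteq> {v. xu v = 0}"
    by (auto simp: dsum_def es ec span_singleton x_lin_facts x_es x_ec)
  show "{v. xu v = 0} \<subseteq> dsum (eigsp f as) (eigsp f ac)"
  proof
    fix v assume "v \<in> {v. xu v = 0}"
    then have "v = xs v *\<^sub>R es + xc v *\<^sub>R ec" using xdec[of v] by (simp add: add.commute)
    then show "v \<in> dsum (eigsp f as) (eigsp f ac)"
      by (auto simp: dsum_def es ec span_singleton)
  qed
qed

lemma dsum_uc: "dsum (eigsp f au) (eigsp f ac) = {v. xs v = 0}"
proof
  show "dsum (eigsp f au) (eigsp f ac) \<subseteq> {v. xs v = 0}"
    by (auto simp: dsum_def eu ec span_singleton x_lin_facts x_eu x_ec)
  show "{v. xs v = 0} \<subseteq> dsum (eigsp f au) (eigsp f ac)"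
  proof
    fix v assume "v \<in> {v. xs v = 0}"
    then have "v = xu v *\<^sub>R eu + xc v *\<^sub>R ec" using xdec[of v] by simp
    then show "v \<in> dsum (eigsp f au) (eigsp f ac)"
      by (auto simp: dsum_def eu ec span_singleton)
  qed
qed

end


context S0 begin

lemma mu2: "\<mu> powr (-2) = 1 / \<mu>^2" "\<mu> powr (-2) \<noteq> \<mu>"
proof -
  show e: "\<mu> powr (-2) = 1 / \<mu>^2" using mu by (simp add: powr_minus powr_realpow divide_inverse)
  have "\<mu>^2 > 1" using mu by (simp add: one_less_power)
  then have "1 / \<mu>^2 < 1" by (simp add: divide_less_eq)
  then show "\<mu> powr (-2) \<noteq> \<mu>" using e mu by (metis less_asym)
qed

lemma g_data:
  "\<exists>l0 xl pP. l0 \<noteq> 0 \<and> mpow g m *v l0 = (\<mu> powr (-2)) *\<^sub>R l0 \<and>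
     eigsp (mpow g m) (\<mu> powr (-2)) = span {l0} \<and> linear xl \<and> linear pP \<and>
     (\<forall>v. mpow g m *v pP v = \<mu> *\<^sub>R pP v) \<and> (\<forall>v. v = pP v + xl v *\<^sub>R l0) \<and>
     (\<forall>p t. mpow g m *v p = \<mu> *\<^sub>R p \<longrightarrow> pP (p + t *\<^sub>R l0) = p \<and> xl (p + t *\<^sub>R l0) = t)"
proof -
  define G where "G = mpow g m"
  define \<mu>' where "\<mu>' = \<mu> powr (-2)"
  obtain l0 where l0: "l0 \<noteq> 0" "G *v l0 = \<mu>' *\<^sub>R l0" "eigsp G \<mu>' = span {l0}"
    using eig_line[OF L0] unfolding G_def \<mu>'_def by blast
  obtain B where B: "B \<subseteq> eigsp G \<mu>" "independent B" "eigsp G \<mu> \<subseteq> span B" "card B = 2"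
    using basis_exists[of "eigsp G \<mu>"] P0 unfolding G_def by metis
  obtain p1 p2 where p12: "B = {p1, p2}" "p1 \<noteq> p2" using B(4) by (meson card_2_iff)
  have Gp: "G *v p1 = \<mu> *\<^sub>R p1" "G *v p2 = \<mu> *\<^sub>R p2" using B(1) p12 by (auto simp: eigsp_def)
  have ind2: "a = 0 \<and> b = 0" if "a *\<^sub>R p1 + b *\<^sub>R p2 = 0" for a b
  proof (rule ccontr)
    assume nz: "\<not> (a = 0 \<and> b = 0)"
    define u where "u x = (if x = p1 then a else b)" for x
    have "(\<Sum>v\<in>B. u v *\<^sub>R v) = a *\<^sub>R p1 + b *\<^sub>R p2" using p12 by (simp add: u_def)
    then have "dependent B" using dependent_finite[of B] p12 nz that
      by (metis (no_types, lifting) finite.emptyI finite.insertI insertCI u_def)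
    then show False using B(2) by simp
  qed
  have inP: "\<exists>a b. p = a *\<^sub>R p1 + b *\<^sub>R p2" if "G *v p = \<mu> *\<^sub>R p" for p
  proof -
    have "p \<in> span {p1, p2}" using B(3) p12 that by (auto simp: eigsp_def)
    then obtain k where "p - k *\<^sub>R p1 \<in> span {p2}" using span_breakdown_eq by blast
    then obtain j where "p - k *\<^sub>R p1 = j *\<^sub>R p2" by (auto simp: span_singleton)
    then have "p = k *\<^sub>R p1 + j *\<^sub>R p2" by (simp add: algebra_simps)
    then show ?thesis by blast
  qed
  have mm: "\<mu>' \<noteq> \<mu>" using mu2 \<mu>'_def by simp
  have ind3: "a = 0 \<and> b = 0 \<and> c = 0" if z: "a *\<^sub>R p1 + b *\<^sub>R p2 + c *\<^sub>R l0 = 0" for a b c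
  proof -
    have "G *v (a *\<^sub>R p1 + b *\<^sub>R p2 + c *\<^sub>R l0) = 0" using z by simp
    then have z2: "\<mu> *\<^sub>R (a *\<^sub>R p1 + b *\<^sub>R p2) + (c * \<mu>') *\<^sub>R l0 = 0"
      by (simp add: matrix_vector_right_distrib matrix_vector_mult_scaleR Gp l0 algebra_simps)
    have "(c * (\<mu>' - \<mu>)) *\<^sub>R l0 = \<mu> *\<^sub>R (a *\<^sub>R p1 + b *\<^sub>R p2) + (c * \<mu>') *\<^sub>R l0 - \<mu> *\<^sub>R (a *\<^sub>R p1 + b *\<^sub>R p2 + c *\<^sub>R l0)"
      by (simp add: algebra_simps)
    then have "(c * (\<mu>' - \<mu>)) *\<^sub>R l0 = 0" using z z2 by simp
    then have c0: "c = 0" using l0(1) mm by simp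
    then show ?thesis using ind2 z by simp
  qed
  obtain y1 y2 xl where y: "linear y1 \<and> linear y2 \<and> linear xl \<and>
     (\<forall>a b c. y1 (a *\<^sub>R p1 + b *\<^sub>R p2 + c *\<^sub>R l0) = a \<and> y2 (a *\<^sub>R p1 + b *\<^sub>R p2 + c *\<^sub>R l0) = b
        \<and> xl (a *\<^sub>R p1 + b *\<^sub>R p2 + c *\<^sub>R l0) = c) \<and>
     (\<forall>v. v = y1 v *\<^sub>R p1 + y2 v *\<^sub>R p2 + xl v *\<^sub>R l0)"
    using coords3[OF ind3] by blast
  define pP where "pP = (\<lambda>v. y1 v *\<^sub>R p1 + y2 v *\<^sub>R p2)"
  have lpP: "linear pP" unfolding pP_def using y
    by (intro linearI) (simp_all add: linear_add linear_scale algebra_simps)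
  have GpP: "G *v pP v = \<mu> *\<^sub>R pP v" for v
    by (simp add: pP_def matrix_vector_right_distrib matrix_vector_mult_scaleR Gp algebra_simps)
  have dec: "v = pP v + xl v *\<^sub>R l0" for v using y by (simp add: pP_def)
  have uq: "pP (p + t *\<^sub>R l0) = p \<and> xl (p + t *\<^sub>R l0) = t" if hp: "G *v p = \<mu> *\<^sub>R p" for p t
  proof -
    obtain a b where p: "p = a *\<^sub>R p1 + b *\<^sub>R p2" using inP[OF hp] by blast
    show ?thesis using y by (simp add: p pP_def)
  qed
  show ?thesis
    apply (rule exI[of _ l0], rule exI[of _ xl], rule exI[of _ pP])
    using l0 y lpP GpP dec uq unfolding G_def \<mu>'_def by blast
qed

end


locale S2 = S1 +
  fixes l0 :: vec3 and xl :: "vec3 \<Rightarrow> real" and pP :: "vec3 \<Rightarrow> vec3"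
  assumes l0: "l0 \<noteq> 0" "mpow g m *v l0 = (\<mu> powr (-2)) *\<^sub>R l0" "eigsp (mpow g m) (\<mu> powr (-2)) = span {l0}"
    and llin: "linear xl" "linear pP"
    and pPin: "\<And>v. mpow g m *v pP v = \<mu> *\<^sub>R pP v"
    and ldec: "\<And>v. v = pP v + xl v *\<^sub>R l0"
    and luniq: "\<And>p t. mpow g m *v p = \<mu> *\<^sub>R p \<Longrightarrow> pP (p + t *\<^sub>R l0) = p \<and> xl (p + t *\<^sub>R l0) = t"
begin

definition \<nu> where "\<nu> = root m \<mu>"
definition \<beta> where "\<beta> = xl (g *v l0)"

lemma nu: "\<nu> > 1" "\<nu> ^ m = \<mu>" "\<nu> > 0"
  using mu m_pos by (auto simp: \<nu>_def)

lemma l_lin_facts: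
  "xl (v + w) = xl v + xl w" "pP (v + w) = pP v + pP w"
  "xl (r *\<^sub>R v) = r * xl v" "pP (r *\<^sub>R v) = r *\<^sub>R pP v" "xl 0 = 0" "pP 0 = 0"
  "xl (v - w) = xl v - xl w" "pP (v - w) = pP v - pP w"
  using llin by (simp_all add: linear_add linear_scale linear_0 linear_diff)

lemma pP_P0: "mpow g m *v p = \<mu> *\<^sub>R p \<Longrightarrow> pP p = p \<and> xl p = 0"
  using luniq[of p 0] by simp

lemma xl_l0: "xl l0 = 1" "pP l0 = 0"
  using luniq[of 0 1] by simp_all

lemma g_P0:
  assumes "mpow g m *v p = \<mu> *\<^sub>R p"
  shows "mpow g m *v (g *v p) = \<mu> *\<^sub>R (g *v p)"
proof -
  have "mpow g m *v (g *v p) = (mpow g m ** g) *v p" by (simp add: matrix_vector_mul_assoc)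
  also have "\<dots> = (g ** mpow g m) *v p" by (simp add: mpow_comm)
  also have "\<dots> = \<mu> *\<^sub>R (g *v p)" by (simp add: matrix_vector_mul_assoc[symmetric] assms matrix_vector_mult_scaleR)
  finally show ?thesis .
qed

lemma g_l0: "g *v l0 = \<beta> *\<^sub>R l0"
proof -
  have "mpow g m *v (g *v l0) = (mpow g m ** g) *v l0" by (simp add: matrix_vector_mul_assoc)
  also have "\<dots> = (g ** mpow g m) *v l0" by (simp add: mpow_comm)
  also have "\<dots> = (\<mu> powr (-2)) *\<^sub>R (g *v l0)" by (simp add: matrix_vector_mul_assoc[symmetric] l0 matrix_vector_mult_scaleR)
  finally have "g *v l0 \<in> eigsp (mpow g m) (\<mu> powr (-2))" by (simp add: eigsp_def)
  then obtain k where k: "g *v l0 = k *\<^sub>R l0" using l0(3) by (auto simp: span_singleton)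
  then have "\<beta> = k" by (simp add: \<beta>_def l_lin_facts xl_l0)
  then show ?thesis using k by simp
qed

lemma g_dec: "pP (g *v v) = g *v pP v \<and> xl (g *v v) = \<beta> * xl v"
proof -
  have "g *v v = g *v (pP v + xl v *\<^sub>R l0)" by (rule arg_cong[where f="(*v) g"], rule ldec)
  also have "\<dots> = g *v pP v + (\<beta> * xl v) *\<^sub>R l0"
    by (simp add: matrix_vector_right_distrib matrix_vector_mult_scaleR g_l0 mult.commute)
  finally have e: "g *v v = g *v pP v + (\<beta> * xl v) *\<^sub>R l0" .
  show ?thesis unfolding e using luniq[OF g_P0[OF pPin]] by blast
qed

lemma gpow_P0:
  assumes "mpow g m *v p = \<mu> *\<^sub>R p"
  shows "mpow g m *v (mpow g n *v p) = \<mu> *\<^sub>R (mpow g n *v p)"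
proof (induction n)
  case 0 then show ?case using assms by (simp add: matrix_vector_mul_lid)
next
  case (Suc n) then show ?case unfolding mpow_vec by (rule g_P0)
qed

lemma gpow_dec: "pP (mpow g n *v v) = mpow g n *v pP v \<and> xl (mpow g n *v v) = \<beta> ^ n * xl v"
  apply (induction n)
   apply (simp add: matrix_vector_mul_lid)
  apply (simp only: mpow_vec g_dec)
  apply simp
  done

lemma beta_m: "\<beta> ^ m = 1 / \<mu>^2"
proof -
  have "xl (mpow g m *v l0) = \<beta> ^ m" using gpow_dec[of m l0] xl_l0 by simp
  moreover have "xl (mpow g m *v l0) = \<mu> powr (-2)" using l0(2) xl_l0 by (simp add: l_lin_facts)
  ultimately show ?thesis using mu2 by simp
qed

lemma abs_beta: "\<bar>\<beta>\<bar> = 1 / \<nu>^2"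
proof -
  have "(\<nu>^2)^m = (\<nu>^m)^2" by (simp add: power_mult[symmetric] mult.commute)
  then have nm: "(\<nu>^2)^m = \<mu>^2" using nu(2) by simp
  have "\<bar>\<beta>\<bar> ^ m = \<bar>\<beta> ^ m\<bar>" by (simp add: power_abs)
  also have "\<dots> = 1 / \<mu>^2" using beta_m mu by simp
  also have "\<dots> = (1 / \<nu>^2) ^ m" using nm by (simp add: power_one_over)
  finally have eq: "\<bar>\<beta>\<bar> ^ m = (1 / \<nu>^2) ^ m" .
  have nn: "0 \<le> 1 / \<nu>^2" using nu by simp
  show ?thesis by (rule power_eq_imp_eq_base[OF eq abs_ge_zero nn m_pos])
qed

definition N :: "vec3 \<Rightarrow> real" where
  "N x = (\<Sum>k<m. norm (mpow g k *v x) / \<nu> ^ k)"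

lemma N_g:
  assumes "mpow g m *v x = \<mu> *\<^sub>R x"
  shows "N (g *v x) = \<nu> * N x"
proof -
  define h where "h j = norm (mpow g j *v x) / \<nu> ^ j" for j
  have sh: "(\<Sum>j<Suc m. h j) = h 0 + (\<Sum>k<m. h (Suc k))" by (rule sum.lessThan_Suc_shift)
  have hm: "h m = h 0" using assms nu mu by (simp add: h_def matrix_vector_mul_lid)
  have "(\<Sum>j<Suc m. h j) = N x + h m" by (simp add: N_def h_def)
  then have "(\<Sum>k<m. h (Suc k)) = N x" using sh hm by simp
  moreover have "N (g *v x) = \<nu> * (\<Sum>k<m. h (Suc k))"
    unfolding N_def h_def sum_distrib_left
  proof (rule sum.cong)
    fix k assume "k \<in> {..<m}"
    have "mpow g k *v (g *v x) = mpow g (Suc k) *v x"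
      by (simp only: mpow_Suc' matrix_vector_mul_assoc)
    moreover have "a / \<nu> ^ k = \<nu> * (a / \<nu> ^ Suc k)" for a
      using nu by (simp add: field_simps)
    ultimately show "norm (mpow g k *v (g *v x)) / \<nu> ^ k = \<nu> * (norm (mpow g (Suc k) *v x) / \<nu> ^ Suc k)"
      by metis
  qed (rule refl)
  ultimately show ?thesis by metis
qed

lemma N_pow:
  assumes "mpow g m *v x = \<mu> *\<^sub>R x"
  shows "N (mpow g n *v x) = \<nu> ^ n * N x"
proof (induction n)
  case 0 then show ?case by (simp add: matrix_vector_mul_lid)
next
  case (Suc n)
  have "N (mpow g (Suc n) *v x) = N (g *v (mpow g n *v x))" by (simp only: mpow_vec)
  also have "\<dots> = \<nu> * N (mpow g n *v x)" by (rule N_g[OF gpow_P0[OF assms]])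
  finally show ?case using Suc by simp
qed

lemma N_nonneg: "N x \<ge> 0"
  unfolding N_def using nu by (intro sum_nonneg) auto

lemma N_ge: "norm x \<le> N x"
proof -
  have "N x = norm (mpow g 0 *v x) / \<nu> ^ 0 + (\<Sum>k\<in>{..<m} - {0}. norm (mpow g k *v x) / \<nu> ^ k)"
    unfolding N_def using m_pos by (subst sum.remove[of _ 0]) auto
  moreover have "(\<Sum>k\<in>{..<m} - {0}. norm (mpow g k *v x) / \<nu> ^ k) \<ge> 0"
    using nu by (intro sum_nonneg) auto
  ultimately show ?thesis by (simp add: matrix_vector_mul_lid)
qed

lemma N_scale: "N (r *\<^sub>R x) = \<bar>r\<bar> * N x"
  unfolding N_def sum_distrib_left by (simp add: matrix_vector_mult_scaleR)

lemma N_add: "N (x + y) \<le> N x + N y"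
  unfolding N_def sum.distrib[symmetric]
  by (intro sum_mono) (simp add: matrix_vector_right_distrib add_divide_distrib[symmetric],
      rule divide_right_mono[OF norm_triangle_ineq], use nu in simp)

lemma N_diff: "N x - N y \<le> N (x - y)"
  using N_add[of "x - y" y] by simp

lemma N_bound: "\<exists>K>0. \<forall>x. N x \<le> K * norm x"
proof -
  have "\<exists>K>0. \<forall>x. norm (mpow g k *v x) \<le> K * norm x" for k
    by (rule linear_bound_vec) simp
  then obtain Kf where Kf: "\<And>k. Kf k > 0" "\<And>k x. norm (mpow g k *v x) \<le> Kf k * norm x" by metis
  define K where "K = (\<Sum>k<m. Kf k) + 1"
  have "N x \<le> K * norm x" for x
  proof -
    have "N x \<le> (\<Sum>k<m. Kf k * norm x)"
      unfolding N_def
    proof (rule sum_mono)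
      fix k assume "k \<in> {..<m}"
      have "\<nu> ^ k \<ge> 1" using nu by simp
      then have "norm (mpow g k *v x) / \<nu> ^ k \<le> norm (mpow g k *v x)"
        using divide_left_mono[OF \<open>\<nu> ^ k \<ge> 1\<close> norm_ge_zero[of "mpow g k *v x"]] nu by simp
      then show "norm (mpow g k *v x) / \<nu> ^ k \<le> Kf k * norm x" using Kf(2)[of k x] by linarith
    qed
    also have "\<dots> = (\<Sum>k<m. Kf k) * norm x" by (rule sum_distrib_right[symmetric])
    also have "\<dots> \<le> K * norm x" unfolding K_def by (intro mult_right_mono) auto
    finally show ?thesis .
  qed
  moreover have "(\<Sum>k<m. Kf k) \<ge> 0" by (intro sum_nonneg) (use Kf(1) less_imp_le in auto)
  then have "K > 0" unfolding K_def by linarith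
  ultimately show ?thesis by blast
qed

definition M :: "vec3 \<Rightarrow> real" where "M v = N (pP v)"

lemma M_gpow: "M (mpow g n *v v) = \<nu> ^ n * M v"
  unfolding M_def using gpow_dec N_pow pPin by simp

lemma M_ginv:
  assumes "mpow g n ** A = mat 1"
  shows "M (A *v v) = M v / \<nu> ^ n"
proof -
  have v: "mpow g n *v (A *v v) = v" by (simp add: matrix_vector_mul_assoc assms matrix_vector_mul_lid)
  have "M v = \<nu> ^ n * M (A *v v)" using M_gpow[of n "A *v v"] unfolding v .
  then show ?thesis using nu by (simp add: field_simps)
qed

lemma xl_gpow: "\<bar>xl (mpow g n *v v)\<bar> = \<bar>xl v\<bar> / (\<nu>^2) ^ n"
  using gpow_dec[of n v] abs_beta by (simp add: abs_mult power_abs power_one_over)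

lemma xl_ginv:
  assumes "mpow g n ** A = mat 1"
  shows "\<bar>xl (A *v v)\<bar> = (\<nu>^2) ^ n * \<bar>xl v\<bar>"
proof -
  have v: "mpow g n *v (A *v v) = v" by (simp add: matrix_vector_mul_assoc assms matrix_vector_mul_lid)
  have "\<bar>xl v\<bar> = \<bar>xl (A *v v)\<bar> / (\<nu>^2) ^ n" using xl_gpow[of n "A *v v"] unfolding v .
  then show ?thesis using nu by (simp add: field_simps)
qed

end


context S2 begin

definition pu where "pu = pP eu"
definition ps where "ps = pP es"

lemma xl_eu: "xl eu \<noteq> 0" and xl_es: "xl es \<noteq> 0"
proof -
  have sub: "subspace (eigsp (mpow g m) \<mu>)" by (rule subspace_eigsp)
  show "xl eu \<noteq> 0"
  proof
    assume "xl eu = 0"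
    then have "eu = pP eu" using ldec[of eu] by simp
    then have "eu \<in> eigsp (mpow g m) \<mu>" using pPin[of eu] by (simp add: eigsp_def)
    then have "span {eu} \<subseteq> eigsp (mpow g m) \<mu>" using sub by (simp add: span_minimal)
    then show False using cond3(1) eu(3) by simp
  qed
  show "xl es \<noteq> 0"
  proof
    assume "xl es = 0"
    then have "es = pP es" using ldec[of es] by simp
    then have "es \<in> eigsp (mpow g m) \<mu>" using pPin[of es] by (simp add: eigsp_def)
    then have "span {es} \<subseteq> eigsp (mpow g m) \<mu>" using sub by (simp add: span_minimal)
    then show False using cond3(3) es(3) by simp
  qed
qed

lemma xu_l0: "xu l0 \<noteq> 0" and xs_l0: "xs l0 \<noteq> 0"
proof -
  show "xu l0 \<noteq> 0"
  proof
    assume "xu l0 = 0"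
    then have "span {l0} \<subseteq> {v. xu v = 0}" by (auto simp: span_singleton x_lin_facts)
    then show False using cond3(5) l0(3) dsum_sc by simp
  qed
  show "xs l0 \<noteq> 0"
  proof
    assume "xs l0 = 0"
    then have "span {l0} \<subseteq> {v. xs v = 0}" by (auto simp: span_singleton x_lin_facts)
    then show False using cond3(4) l0(3) dsum_uc by simp
  qed
qed

lemma P0_pu: "mpow g m *v pu = \<mu> *\<^sub>R pu" "mpow g m *v ps = \<mu> *\<^sub>R ps"
  using pPin by (simp_all add: pu_def ps_def)

lemma dsum_int_u: "dsum (eigsp f au) (eigsp (mpow g m) (\<mu> powr (-2))) \<inter> eigsp (mpow g m) \<mu> \<subseteq> range (\<lambda>a. a *\<^sub>R pu)"
proof
  fix z assume z: "z \<in> dsum (eigsp f au) (eigsp (mpow g m) (\<mu> powr (-2))) \<inter> eigsp (mpow g m) \<mu>"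
  then obtain a b where zab: "z = a *\<^sub>R eu + b *\<^sub>R l0"
    by (auto simp: dsum_def eu(3) l0(3) span_singleton)
  have "mpow g m *v z = \<mu> *\<^sub>R z" using z by (simp add: eigsp_def)
  then have "pP z = z" using pP_P0 by blast
  moreover have "pP z = a *\<^sub>R pu" by (simp add: zab l_lin_facts xl_l0 pu_def)
  ultimately show "z \<in> range (\<lambda>a. a *\<^sub>R pu)" by auto
qed

lemma dsum_int_s: "dsum (eigsp f as) (eigsp (mpow g m) (\<mu> powr (-2))) \<inter> eigsp (mpow g m) \<mu> \<subseteq> range (\<lambda>a. a *\<^sub>R ps)"
proof
  fix z assume z: "z \<in> dsum (eigsp f as) (eigsp (mpow g m) (\<mu> powr (-2))) \<inter> eigsp (mpow g m) \<mu>"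
  then obtain a b where zab: "z = a *\<^sub>R es + b *\<^sub>R l0"
    by (auto simp: dsum_def es(3) l0(3) span_singleton)
  have "mpow g m *v z = \<mu> *\<^sub>R z" using z by (simp add: eigsp_def)
  then have "pP z = z" using pP_P0 by blast
  moreover have "pP z = a *\<^sub>R ps" by (simp add: zab l_lin_facts xl_l0 ps_def)
  ultimately show "z \<in> range (\<lambda>a. a *\<^sub>R ps)" by auto
qed

lemma act_sub:
  assumes "S \<subseteq> range (\<lambda>a. a *\<^sub>R p)" "xu (mpow g k *v p) = 0 \<or> xs (mpow g k *v p) = 0"
  shows "act (mpow g k) S \<subseteq> dsum (eigsp f as) (eigsp f ac) \<union> dsum (eigsp f au) (eigsp f ac)"
proof
  fix y assume "y \<in> act (mpow g k) S"
  then obtain a where "y = mpow g k *v (a *\<^sub>R p)" using assms(1) by (auto simp: act_def)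
  then have y: "y = a *\<^sub>R (mpow g k *v p)" by (simp add: matrix_vector_mult_scaleR)
  show "y \<in> dsum (eigsp f as) (eigsp f ac) \<union> dsum (eigsp f au) (eigsp f ac)"
    using assms(2) unfolding dsum_sc dsum_uc y by (auto simp: x_lin_facts)
qed

lemma D_small: "k < m \<Longrightarrow> xu (mpow g k *v pu) \<noteq> 0 \<and> xs (mpow g k *v pu) \<noteq> 0 \<and>
    xu (mpow g k *v ps) \<noteq> 0 \<and> xs (mpow g k *v ps) \<noteq> 0"
  using act_sub[OF dsum_int_u, of k] act_sub[OF dsum_int_s, of k] cond4 by blast

lemma gpow_mq:
  assumes "mpow g m *v p = \<mu> *\<^sub>R p"
  shows "mpow g (m * q + r) *v p = \<mu> ^ q *\<^sub>R (mpow g r *v p)"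
proof (induction q)
  case 0 then show ?case by simp
next
  case (Suc q)
  have "mpow g (m * Suc q + r) = mpow g m ** mpow g (m * q + r)"
    by (simp add: mpow_add[symmetric] add.assoc)
  then have "mpow g (m * Suc q + r) *v p = mpow g m *v (\<mu> ^ q *\<^sub>R (mpow g r *v p))"
    using Suc by (simp add: matrix_vector_mul_assoc[symmetric])
  also have "\<dots> = \<mu> ^ Suc q *\<^sub>R (mpow g r *v p)"
    using gpow_P0[OF assms, of r] by (simp add: matrix_vector_mult_scaleR)
  finally show ?case .
qed

definition Dset :: "vec3 set" where
  "Dset = range (\<lambda>k. mpow g k *v pu) \<union> range (\<lambda>k. mpow g k *v ps)"

definition \<rho> :: "nat \<Rightarrow> real" where
  "\<rho> r = min (min (\<bar>xu (mpow g r *v pu)\<bar> / N (mpow g r *v pu)) (\<bar>xs (mpow g r *v pu)\<bar> / N (mpow g r *v pu)))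
             (min (\<bar>xu (mpow g r *v ps)\<bar> / N (mpow g r *v ps)) (\<bar>xs (mpow g r *v ps)\<bar> / N (mpow g r *v ps)))"

definition \<kappa>0 :: real where "\<kappa>0 = Min (\<rho> ` {..<m})"

lemma N_pos: "x \<noteq> 0 \<Longrightarrow> N x > 0"
  using N_ge[of x] by (metis zero_less_norm_iff order_less_le_trans)

lemma rho_pos: "r < m \<Longrightarrow> \<rho> r > 0"
proof -
  assume r: "r < m"
  have nz: "\<And>x. xu x \<noteq> 0 \<Longrightarrow> x \<noteq> 0" by (auto simp: x_lin_facts)
  show ?thesis using D_small[OF r] N_pos nz unfolding \<rho>_def by auto
qed

lemma kappa0_pos: "\<kappa>0 > 0"
  unfolding \<kappa>0_def using rho_pos m_pos by (subst Min_gr_iff) auto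

lemma kappa0_le: "r < m \<Longrightarrow> \<kappa>0 \<le> \<rho> r"
  unfolding \<kappa>0_def by (rule Min_le) auto

lemma Dset_props:
  assumes "d \<in> Dset"
  shows "mpow g m *v d = \<mu> *\<^sub>R d" "\<bar>xu d\<bar> \<ge> \<kappa>0 * N d" "\<bar>xs d\<bar> \<ge> \<kappa>0 * N d" "N d > 0"
    "mpow g n *v d \<in> Dset"
proof -
  obtain k p where kp: "d = mpow g k *v p" "p = pu \<or> p = ps" using assms by (auto simp: Dset_def)
  have Pp: "mpow g m *v p = \<mu> *\<^sub>R p" using kp(2) P0_pu by auto
  show "mpow g m *v d = \<mu> *\<^sub>R d" using gpow_P0[OF Pp] kp by simp
  have "mpow g n *v d = mpow g (n + k) *v p" by (simp add: kp mpow_add matrix_vector_mul_assoc)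
  then show "mpow g n *v d \<in> Dset" using kp(2) by (auto simp: Dset_def)
  define q r where "q = k div m" "r = k mod m"
  have rm: "r < m" using m_pos by (simp add: q_r_def)
  have "k = m * q + r" by (simp add: q_r_def)
  then have dq: "d = \<mu> ^ q *\<^sub>R (mpow g r *v p)" using gpow_mq[OF Pp] kp by simp
  have mq: "\<mu> ^ q > 0" using mu by simp
  have rr: "\<kappa>0 \<le> \<bar>xu (mpow g r *v p)\<bar> / N (mpow g r *v p) \<and> \<kappa>0 \<le> \<bar>xs (mpow g r *v p)\<bar> / N (mpow g r *v p)"
    using kappa0_le[OF rm] kp(2) unfolding \<rho>_def by auto
  have nz: "mpow g r *v p \<noteq> 0" using D_small[OF rm] kp(2) by (auto simp: x_lin_facts)
  then have Np: "N (mpow g r *v p) > 0" by (rule N_pos)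
  show "N d > 0" using Np mq by (simp add: dq N_scale)
  show "\<bar>xu d\<bar> \<ge> \<kappa>0 * N d" using rr Np mq
    by (simp add: dq N_scale x_lin_facts abs_mult pos_le_divide_eq mult.assoc mult.left_commute)
  show "\<bar>xs d\<bar> \<ge> \<kappa>0 * N d" using rr Np mq
    by (simp add: dq N_scale x_lin_facts abs_mult pos_le_divide_eq mult.assoc mult.left_commute)
qed

lemma pu_in: "pu \<in> Dset" "ps \<in> Dset"
  unfolding Dset_def by (auto intro!: range_eqI[of _ _ 0] simp: matrix_vector_mul_lid)

end


lemma near:
  fixes F :: "vec3 \<Rightarrow> real"
  assumes "v = a *\<^sub>R e + r" "norm r \<le> \<eta> * \<bar>a\<bar>" "F v \<ge> \<bar>a\<bar> * Fe - K * norm r"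
    "norm e \<le> E" "K * \<eta> \<le> Fe / 2" "\<eta> \<le> E" "0 \<le> \<eta>" "0 \<le> K" "E > 0"
  shows "F v \<ge> Fe / (4 * E) * norm v"
proof -
  have "0 \<le> K * \<eta>" using assms(7,8) by simp
  then have Fe: "Fe \<ge> 0" using assms(5) by linarith
  have "K * norm r \<le> K * (\<eta> * \<bar>a\<bar>)" using assms(2,8) by (simp add: mult_left_mono)
  also have "\<dots> = (K * \<eta>) * \<bar>a\<bar>" by (simp add: mult.assoc)
  also have "\<dots> \<le> Fe / 2 * \<bar>a\<bar>" by (rule mult_right_mono[OF assms(5) abs_ge_zero])
  finally have kr: "K * norm r \<le> Fe / 2 * \<bar>a\<bar>" .
  have "\<bar>a\<bar> * Fe / 2 = \<bar>a\<bar> * Fe - Fe / 2 * \<bar>a\<bar>" by (simp add: field_simps)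
  then have Fv: "F v \<ge> \<bar>a\<bar> * Fe / 2" using assms(3) kr by linarith
  have "norm v \<le> \<bar>a\<bar> * norm e + norm r" using assms(1) norm_triangle_ineq[of "a *\<^sub>R e" r] by simp
  also have "\<dots> \<le> \<bar>a\<bar> * E + \<eta> * \<bar>a\<bar>" using assms(2,4) by (simp add: mult_left_mono add_mono)
  also have "\<dots> \<le> 2 * E * \<bar>a\<bar>" using assms(6) by (simp add: algebra_simps mult_right_mono)
  finally have nv: "norm v \<le> 2 * E * \<bar>a\<bar>" .
  have "Fe / (4 * E) * norm v \<le> Fe / (4 * E) * (2 * E * \<bar>a\<bar>)"
    using nv Fe assms(9) by (intro mult_left_mono) auto
  also have "\<dots> = \<bar>a\<bar> * Fe / 2" using assms(9) by (simp add: field_simps)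
  finally show ?thesis using Fv by linarith
qed

lemma ev_small: "0 < D \<Longrightarrow> eventually (\<lambda>x. C * x < D) (at_right (0::real))"
proof -
  assume D: "0 < D"
  have "((\<lambda>x. C * x) \<longlongrightarrow> C * 0) (at_right (0::real))"
    by (intro tendsto_intros)
  then show ?thesis using D by (simp add: order_tendstoD(2))
qed

lemma ev_pos: "eventually (\<lambda>x. 0 < x) (at_right (0::real))"
  using eventually_at_right_less[of "0::real"] by simp

lemma ev_obtain: "eventually P (at_right (0::real)) \<Longrightarrow> \<exists>x. P x"
  using eventually_happens'[of "at_right (0::real)" P] by simp

lemma ev_grow: "(q::real) > 1 \<Longrightarrow> eventually (\<lambda>n. C \<le> q ^ n) sequentially"
proof -
  assume q: "q > 1"
  obtain N where "C < q ^ N" using real_arch_pow[OF q] by blast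
  then have "\<forall>n\<ge>N. C \<le> q ^ n" using q by (meson less_imp_le order.strict_trans2 power_increasing)
  then show ?thesis by (auto simp: eventually_sequentially)
qed

lemma inv_props:
  fixes A :: mat3
  assumes "det A = 1"
  shows "A ** matrix_inv A = mat 1" "matrix_inv A ** A = mat 1"
proof -
  have "invertible A" by (simp add: invertible_det_nz assms)
  then have ex: "\<exists>B::mat3. A ** B = mat 1 \<and> B ** A = mat 1" by (auto simp: invertible_def)
  show "A ** matrix_inv A = mat 1" "matrix_inv A ** A = mat 1"
    unfolding matrix_inv_def using someI_ex[OF ex] by auto
qed


context S2 begin

lemma M_scale: "M (r *\<^sub>R v) = \<bar>r\<bar> * M v"
  by (simp add: M_def l_lin_facts N_scale)

lemma M_nonneg: "M v \<ge> 0"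
  by (simp add: M_def N_nonneg)

lemma M_add: "M (v + w) \<le> M v + M w"
  by (simp add: M_def l_lin_facts N_add)

lemma M_lb: "M (a *\<^sub>R e + r) \<ge> \<bar>a\<bar> * M e - M r"
proof -
  have "M (a *\<^sub>R e) \<le> M (a *\<^sub>R e + r) + M (- r)" using M_add[of "a *\<^sub>R e + r" "- r"] by simp
  moreover have "M (- r) = M r" using M_scale[of "-1" r] by simp
  ultimately show ?thesis by (simp add: M_scale)
qed

lemma N_neg: "N (- x) = N x"
  using N_scale[of "-1" x] by simp

lemma N_lb: "N (a *\<^sub>R e + r) \<ge> \<bar>a\<bar> * N e - N r"
proof -
  have "N (a *\<^sub>R e) \<le> N (a *\<^sub>R e + r) + N (- r)" using N_add[of "a *\<^sub>R e + r" "- r"] by simp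
  then show ?thesis by (simp add: N_scale N_neg)
qed

lemma norm_le_M: "norm (pP v) \<le> M v"
  by (simp add: M_def N_ge)

definition Dc :: "real \<Rightarrow> vec3 \<Rightarrow> bool" where
  "Dc \<epsilon> v \<longleftrightarrow> (\<exists>d\<in>Dset. \<exists>t. N (pP v - t *\<^sub>R d) \<le> \<epsilon> * M v)"

lemma Dc_scale:
  assumes "Dc \<epsilon> v" shows "Dc \<epsilon> (r *\<^sub>R v)"
proof -
  obtain d t where d: "d \<in> Dset" "N (pP v - t *\<^sub>R d) \<le> \<epsilon> * M v" using assms by (auto simp: Dc_def)
  have "pP (r *\<^sub>R v) - (r * t) *\<^sub>R d = r *\<^sub>R (pP v - t *\<^sub>R d)" by (simp add: l_lin_facts algebra_simps)
  then have "N (pP (r *\<^sub>R v) - (r * t) *\<^sub>R d) = \<bar>r\<bar> * N (pP v - t *\<^sub>R d)" by (simp add: N_scale)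
  also have "\<dots> \<le> \<bar>r\<bar> * (\<epsilon> * M v)" using d(2) by (simp add: mult_left_mono)
  also have "\<dots> = \<epsilon> * M (r *\<^sub>R v)" by (simp add: M_scale)
  finally show ?thesis using d(1) by (auto simp: Dc_def)
qed

lemma P0_lin: "mpow g m *v x = \<mu> *\<^sub>R x \<Longrightarrow> mpow g m *v y = \<mu> *\<^sub>R y \<Longrightarrow>
  mpow g m *v (x - t *\<^sub>R y) = \<mu> *\<^sub>R (x - t *\<^sub>R y)"
  by (simp add: matrix_vector_mult_diff_distrib matrix_vector_mult_scaleR algebra_simps)

lemma Dc_gpow:
  assumes "Dc \<epsilon> v" "\<epsilon> \<ge> 0" shows "Dc \<epsilon> (mpow g n *v v)"
proof -
  obtain d t where d: "d \<in> Dset" "N (pP v - t *\<^sub>R d) \<le> \<epsilon> * M v" using assms by (auto simp: Dc_def)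
  have P: "mpow g m *v (pP v - t *\<^sub>R d) = \<mu> *\<^sub>R (pP v - t *\<^sub>R d)"
    using P0_lin[OF pPin Dset_props(1)[OF d(1)]] .
  have e: "pP (mpow g n *v v) - t *\<^sub>R (mpow g n *v d) = mpow g n *v (pP v - t *\<^sub>R d)"
    using gpow_dec by (simp add: matrix_vector_mult_diff_distrib matrix_vector_mult_scaleR)
  have "N (pP (mpow g n *v v) - t *\<^sub>R (mpow g n *v d)) = \<nu> ^ n * N (pP v - t *\<^sub>R d)"
    unfolding e by (rule N_pow[OF P])
  also have "\<dots> \<le> \<nu> ^ n * (\<epsilon> * M v)" using d(2) nu by (simp add: mult_left_mono)
  also have "\<dots> = \<epsilon> * M (mpow g n *v v)" by (simp add: M_gpow)
  finally show ?thesis using Dset_props(5)[OF d(1)] by (auto simp: Dc_def)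
qed

lemma Kconst: "\<exists>K>0. \<forall>v. \<bar>xu v\<bar> \<le> K * norm v \<and> \<bar>xc v\<bar> \<le> K * norm v \<and> \<bar>xs v\<bar> \<le> K * norm v
   \<and> \<bar>xl v\<bar> \<le> K * norm v \<and> M v \<le> K * norm v"
proof -
  obtain K1 where K1: "K1 > 0" "\<forall>v. \<bar>xu v\<bar> \<le> K1 * norm v \<and> \<bar>xc v\<bar> \<le> K1 * norm v \<and> \<bar>xs v\<bar> \<le> K1 * norm v"
    using xbound by blast
  obtain K2 where K2: "K2 > 0" "\<forall>v. \<bar>xl v\<bar> \<le> K2 * norm v" using linear_bound llin(1) by blast
  obtain K3 where K3: "K3 > 0" "\<forall>v. norm (pP v) \<le> K3 * norm v" using linear_bound_vec llin(2) by blast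
  obtain KN where KN: "KN > 0" "\<forall>x. N x \<le> KN * norm x" using N_bound by blast
  define K where "K = K1 + K2 + KN * K3"
  have "KN * K3 > 0" using K3 KN by simp
  then have Kp: "K > 0" using K1 K2 by (simp add: K_def)
  have "\<bar>xu v\<bar> \<le> K * norm v \<and> \<bar>xc v\<bar> \<le> K * norm v \<and> \<bar>xs v\<bar> \<le> K * norm v
   \<and> \<bar>xl v\<bar> \<le> K * norm v \<and> M v \<le> K * norm v" for v
  proof -
    have a: "K1 * norm v \<le> K * norm v" "K2 * norm v \<le> K * norm v" "(KN * K3) * norm v \<le> K * norm v"
      using K1 K2 K3 KN by (auto simp: K_def intro!: mult_right_mono)
    have "M v \<le> KN * norm (pP v)" using KN by (simp add: M_def)
    also have "\<dots> \<le> KN * (K3 * norm v)" using K3 KN by (simp add: mult_left_mono)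
    finally have "M v \<le> (KN * K3) * norm v" by (simp add: mult.assoc)
    then show ?thesis using a K1(2) K2(2) by (meson order_trans)
  qed
  then show ?thesis using Kp by blast
qed

end


context S2 begin

lemma eu_nz_norm: "norm eu > 0" "norm es > 0" "norm l0 > 0"
  using eu(2) es(2) l0(1) by auto

lemma Npu_pos: "N pu > 0" "N ps > 0"
  using Dset_props(4)[OF pu_in(1)] Dset_props(4)[OF pu_in(2)] by auto

lemma M_eu: "M eu = N pu" "M es = N ps"
  by (simp_all add: M_def pu_def ps_def)

lemma La_lemma:
  assumes K: "\<forall>v. \<bar>xu v\<bar> \<le> K * norm v \<and> \<bar>xc v\<bar> \<le> K * norm v \<and> \<bar>xs v\<bar> \<le> K * norm v
             \<and> \<bar>xl v\<bar> \<le> K * norm v \<and> M v \<le> K * norm v" "K > 0"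
    and Kr: "Kr = norm eu + norm ec + norm es"
    and da: "0 < \<delta>" "Kr * \<delta> \<le> norm eu" "K * Kr * \<delta> \<le> \<bar>xl eu\<bar> / 2" "K * Kr * \<delta> \<le> N pu / 2"
       "K * Kr * \<delta> \<le> \<epsilon> * N pu / 2" "0 \<le> \<epsilon>"
    and Q: "\<bar>xc v\<bar> + \<bar>xs v\<bar> \<le> \<delta> * \<bar>xu v\<bar>"
  shows "\<bar>xu v\<bar> \<ge> 1 / (4 * norm eu) * norm v" "\<bar>xl v\<bar> \<ge> \<bar>xl eu\<bar> / (4 * norm eu) * norm v"
    "M v \<ge> N pu / (4 * norm eu) * norm v" "Dc \<epsilon> v"
proof -
  define a where "a = xu v"
  define r where "r = xc v *\<^sub>R ec + xs v *\<^sub>R es"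
  have v: "v = a *\<^sub>R eu + r" using xdec[of v] by (simp add: a_def r_def add.assoc)
  have Krp: "Kr \<ge> 0" by (simp add: Kr)
  have "norm r \<le> \<bar>xc v\<bar> * norm ec + \<bar>xs v\<bar> * norm es"
    using norm_triangle_ineq[of "xc v *\<^sub>R ec" "xs v *\<^sub>R es"] by (simp add: r_def)
  also have "\<dots> \<le> \<bar>xc v\<bar> * Kr + \<bar>xs v\<bar> * Kr"
    by (intro add_mono mult_left_mono) (auto simp: Kr)
  also have "\<dots> = (\<bar>xc v\<bar> + \<bar>xs v\<bar>) * Kr" by (simp add: algebra_simps)
  also have "\<dots> \<le> (\<delta> * \<bar>a\<bar>) * Kr" using Q Krp by (simp add: a_def mult_right_mono)
  finally have nr: "norm r \<le> (Kr * \<delta>) * \<bar>a\<bar>" by (simp add: algebra_simps)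
  have eta: "0 \<le> Kr * \<delta>" using Krp da(1) by simp
  have Kr_r: "K * norm r \<le> (K * Kr * \<delta>) * \<bar>a\<bar>"
    using nr K(2) by (simp add: mult.assoc mult_left_mono)
  show "\<bar>xu v\<bar> \<ge> 1 / (4 * norm eu) * norm v"
    by (rule near[OF v nr, where F="\<lambda>v. \<bar>xu v\<bar>" and Fe=1 and K=0]) (use eta da eu_nz_norm in \<open>simp_all add: a_def\<close>)
  show "\<bar>xl v\<bar> \<ge> \<bar>xl eu\<bar> / (4 * norm eu) * norm v"
  proof (rule near[OF v nr, where F="\<lambda>v. \<bar>xl v\<bar>" and Fe="\<bar>xl eu\<bar>" and K=K])
    have "\<bar>xl v\<bar> = \<bar>a * xl eu + xl r\<bar>" by (simp add: v l_lin_facts)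
    also have "\<dots> \<ge> \<bar>a\<bar> * \<bar>xl eu\<bar> - \<bar>xl r\<bar>" by (simp add: abs_mult[symmetric] abs_triangle_ineq4[of "a * xl eu" "- xl r", simplified] )
    moreover have "\<bar>xl r\<bar> \<le> K * norm r" using K by blast
    ultimately show "\<bar>a\<bar> * \<bar>xl eu\<bar> - K * norm r \<le> \<bar>xl v\<bar>" by linarith
  qed (use eta da K eu_nz_norm in \<open>simp_all add: mult.assoc\<close>)
  have Mv: "M v \<ge> \<bar>a\<bar> * N pu - K * norm r"
    using M_lb[of a eu r] K M_eu by (simp add: v) (smt (verit))
  show "M v \<ge> N pu / (4 * norm eu) * norm v"
    by (rule near[OF v nr, where F=M and Fe="N pu" and K=K, OF Mv]) (use eta da K eu_nz_norm in \<open>simp_all add: mult.assoc\<close>)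
  show "Dc \<epsilon> v"
  proof -
    have e: "pP v - a *\<^sub>R pu = pP r" by (simp add: v l_lin_facts pu_def)
    have "N (pP r) = M r" by (simp add: M_def)
    also have "\<dots> \<le> K * norm r" using K by blast
    also have "\<dots> \<le> (K * Kr * \<delta>) * \<bar>a\<bar>" by (rule Kr_r)
    also have "\<dots> \<le> (\<epsilon> * N pu / 2) * \<bar>a\<bar>" by (rule mult_right_mono[OF da(5) abs_ge_zero])
    also have "\<dots> = \<epsilon> * (\<bar>a\<bar> * N pu / 2)" by (simp add: algebra_simps)
    also have "\<dots> \<le> \<epsilon> * M v"
    proof (rule mult_left_mono[OF _ da(6)])
      have "(K * Kr * \<delta>) * \<bar>a\<bar> \<le> (N pu / 2) * \<bar>a\<bar>" by (rule mult_right_mono[OF da(4) abs_ge_zero])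
      then show "\<bar>a\<bar> * N pu / 2 \<le> M v" using Mv Kr_r by (simp add: algebra_simps)
    qed
    finally have "N (pP v - a *\<^sub>R pu) \<le> \<epsilon> * M v" using e by simp
    then show ?thesis using pu_in(1) unfolding Dc_def by blast
  qed
qed

lemma Lai_lemma:
  assumes K: "\<forall>v. \<bar>xu v\<bar> \<le> K * norm v \<and> \<bar>xc v\<bar> \<le> K * norm v \<and> \<bar>xs v\<bar> \<le> K * norm v
             \<and> \<bar>xl v\<bar> \<le> K * norm v \<and> M v \<le> K * norm v" "K > 0"
    and Kr: "Kr = norm eu + norm ec + norm es"
    and da: "0 < \<delta>" "Kr * \<delta> \<le> norm es" "K * Kr * \<delta> \<le> \<bar>xl es\<bar> / 2" "K * Kr * \<delta> \<le> N ps / 2"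
       "K * Kr * \<delta> \<le> \<epsilon> * N ps / 2" "0 \<le> \<epsilon>"
    and Q: "\<bar>xc v\<bar> + \<bar>xu v\<bar> \<le> \<delta> * \<bar>xs v\<bar>"
  shows "\<bar>xs v\<bar> \<ge> 1 / (4 * norm es) * norm v" "\<bar>xl v\<bar> \<ge> \<bar>xl es\<bar> / (4 * norm es) * norm v"
    "M v \<ge> N ps / (4 * norm es) * norm v" "Dc \<epsilon> v"
proof -
  define a where "a = xs v"
  define r where "r = xc v *\<^sub>R ec + xu v *\<^sub>R eu"
  have v: "v = a *\<^sub>R es + r" using xdec[of v] by (simp add: a_def r_def algebra_simps)
  have Krp: "Kr \<ge> 0" by (simp add: Kr)
  have "norm r \<le> \<bar>xc v\<bar> * norm ec + \<bar>xu v\<bar> * norm eu"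
    using norm_triangle_ineq[of "xc v *\<^sub>R ec" "xu v *\<^sub>R eu"] by (simp add: r_def)
  also have "\<dots> \<le> \<bar>xc v\<bar> * Kr + \<bar>xu v\<bar> * Kr"
    by (intro add_mono mult_left_mono) (auto simp: Kr)
  also have "\<dots> = (\<bar>xc v\<bar> + \<bar>xu v\<bar>) * Kr" by (simp add: algebra_simps)
  also have "\<dots> \<le> (\<delta> * \<bar>a\<bar>) * Kr" using Q Krp by (simp add: a_def mult_right_mono)
  finally have nr: "norm r \<le> (Kr * \<delta>) * \<bar>a\<bar>" by (simp add: algebra_simps)
  have eta: "0 \<le> Kr * \<delta>" using Krp da(1) by simp
  have Kr_r: "K * norm r \<le> (K * Kr * \<delta>) * \<bar>a\<bar>"
    using nr K(2) by (simp add: mult.assoc mult_left_mono)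
  show "\<bar>xs v\<bar> \<ge> 1 / (4 * norm es) * norm v"
    by (rule near[OF v nr, where F="\<lambda>v. \<bar>xs v\<bar>" and Fe=1 and K=0]) (use eta da eu_nz_norm in \<open>simp_all add: a_def\<close>)
  show "\<bar>xl v\<bar> \<ge> \<bar>xl es\<bar> / (4 * norm es) * norm v"
  proof (rule near[OF v nr, where F="\<lambda>v. \<bar>xl v\<bar>" and Fe="\<bar>xl es\<bar>" and K=K])
    have "\<bar>xl v\<bar> = \<bar>a * xl es + xl r\<bar>" by (simp add: v l_lin_facts)
    also have "\<dots> \<ge> \<bar>a\<bar> * \<bar>xl es\<bar> - \<bar>xl r\<bar>" by (simp add: abs_mult[symmetric] abs_triangle_ineq4[of "a * xl es" "- xl r", simplified] )
    moreover have "\<bar>xl r\<bar> \<le> K * norm r" using K by blast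
    ultimately show "\<bar>a\<bar> * \<bar>xl es\<bar> - K * norm r \<le> \<bar>xl v\<bar>" by linarith
  qed (use eta da K eu_nz_norm in \<open>simp_all add: mult.assoc\<close>)
  have Mv: "M v \<ge> \<bar>a\<bar> * N ps - K * norm r"
    using M_lb[of a es r] K M_eu by (simp add: v) (smt (verit))
  show "M v \<ge> N ps / (4 * norm es) * norm v"
    by (rule near[OF v nr, where F=M and Fe="N ps" and K=K, OF Mv]) (use eta da K eu_nz_norm in \<open>simp_all add: mult.assoc\<close>)
  show "Dc \<epsilon> v"
  proof -
    have e: "pP v - a *\<^sub>R ps = pP r" by (simp add: v l_lin_facts ps_def)
    have "N (pP r) = M r" by (simp add: M_def)
    also have "\<dots> \<le> K * norm r" using K by blast
    also have "\<dots> \<le> (K * Kr * \<delta>) * \<bar>a\<bar>" by (rule Kr_r)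
    also have "\<dots> \<le> (\<epsilon> * N ps / 2) * \<bar>a\<bar>" by (rule mult_right_mono[OF da(5) abs_ge_zero])
    also have "\<dots> = \<epsilon> * (\<bar>a\<bar> * N ps / 2)" by (simp add: algebra_simps)
    also have "\<dots> \<le> \<epsilon> * M v"
    proof (rule mult_left_mono[OF _ da(6)])
      have "(K * Kr * \<delta>) * \<bar>a\<bar> \<le> (N ps / 2) * \<bar>a\<bar>" by (rule mult_right_mono[OF da(4) abs_ge_zero])
      then show "\<bar>a\<bar> * N ps / 2 \<le> M v" using Mv Kr_r by (simp add: algebra_simps)
    qed
    finally have "N (pP v - a *\<^sub>R ps) \<le> \<epsilon> * M v" using e by simp
    then show ?thesis using pu_in(2) unfolding Dc_def by blast
  qed
qed

lemma Lbi_lemma: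
  assumes K: "\<forall>v. \<bar>xu v\<bar> \<le> K * norm v \<and> \<bar>xc v\<bar> \<le> K * norm v \<and> \<bar>xs v\<bar> \<le> K * norm v
             \<and> \<bar>xl v\<bar> \<le> K * norm v \<and> M v \<le> K * norm v" "K > 0"
    and d: "0 < \<delta>" "K * \<delta> \<le> \<bar>xu l0\<bar> / 2" "K * \<delta> \<le> \<bar>xs l0\<bar> / 2" "\<delta> \<le> norm l0"
    and Q: "M v \<le> \<delta> * \<bar>xl v\<bar>"
  shows "\<bar>xu v\<bar> \<ge> \<bar>xu l0\<bar> / (4 * norm l0) * norm v" "\<bar>xs v\<bar> \<ge> \<bar>xs l0\<bar> / (4 * norm l0) * norm v"
    "\<bar>xl v\<bar> \<ge> 1 / (4 * norm l0) * norm v"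
proof -
  define a where "a = xl v"
  define r where "r = pP v"
  have v: "v = a *\<^sub>R l0 + r" using ldec[of v] by (simp add: a_def r_def add.commute)
  have nr: "norm r \<le> \<delta> * \<bar>a\<bar>" using norm_le_M[of v] Q by (simp add: r_def a_def)
  show "\<bar>xu v\<bar> \<ge> \<bar>xu l0\<bar> / (4 * norm l0) * norm v"
  proof (rule near[OF v nr, where F="\<lambda>v. \<bar>xu v\<bar>" and Fe="\<bar>xu l0\<bar>" and K=K])
    have "\<bar>xu v\<bar> = \<bar>a * xu l0 + xu r\<bar>" by (simp add: v x_lin_facts)
    also have "\<dots> \<ge> \<bar>a\<bar> * \<bar>xu l0\<bar> - \<bar>xu r\<bar>" by (simp add: abs_mult[symmetric] abs_triangle_ineq4[of "a * xu l0" "- xu r", simplified] )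
    moreover have "\<bar>xu r\<bar> \<le> K * norm r" using K by blast
    ultimately show "\<bar>a\<bar> * \<bar>xu l0\<bar> - K * norm r \<le> \<bar>xu v\<bar>" by linarith
  qed (use d K eu_nz_norm in \<open>simp_all\<close>)
  show "\<bar>xs v\<bar> \<ge> \<bar>xs l0\<bar> / (4 * norm l0) * norm v"
  proof (rule near[OF v nr, where F="\<lambda>v. \<bar>xs v\<bar>" and Fe="\<bar>xs l0\<bar>" and K=K])
    have "\<bar>xs v\<bar> = \<bar>a * xs l0 + xs r\<bar>" by (simp add: v x_lin_facts)
    also have "\<dots> \<ge> \<bar>a\<bar> * \<bar>xs l0\<bar> - \<bar>xs r\<bar>" by (simp add: abs_mult[symmetric] abs_triangle_ineq4[of "a * xs l0" "- xs r", simplified] )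
    moreover have "\<bar>xs r\<bar> \<le> K * norm r" using K by blast
    ultimately show "\<bar>a\<bar> * \<bar>xs l0\<bar> - K * norm r \<le> \<bar>xs v\<bar>" by linarith
  qed (use d K eu_nz_norm in \<open>simp_all\<close>)
  show "\<bar>xl v\<bar> \<ge> 1 / (4 * norm l0) * norm v"
    by (rule near[OF v nr, where F="\<lambda>v. \<bar>xl v\<bar>" and Fe=1 and K=0]) (use d eu_nz_norm in \<open>simp_all add: a_def\<close>)
qed

lemma Lb_lemma:
  assumes K: "\<forall>v. \<bar>xu v\<bar> \<le> K * norm v \<and> \<bar>xc v\<bar> \<le> K * norm v \<and> \<bar>xs v\<bar> \<le> K * norm v
             \<and> \<bar>xl v\<bar> \<le> K * norm v \<and> M v \<le> K * norm v" "K > 0"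
    and e: "0 < \<epsilon>" "\<epsilon> \<le> 1/4" "8 * K * \<epsilon> \<le> \<kappa>0" "0 < \<delta>" "norm l0 * \<delta> \<le> \<epsilon>"
    and Q: "\<bar>xl v\<bar> \<le> \<delta> * M v" "Dc \<epsilon> v"
  shows "\<bar>xu v\<bar> \<ge> \<kappa>0 / 4 * norm v" "\<bar>xs v\<bar> \<ge> \<kappa>0 / 4 * norm v" "M v \<ge> 1 / 2 * norm v"
proof -
  obtain d t where dt: "d \<in> Dset" "N (pP v - t *\<^sub>R d) \<le> \<epsilon> * M v" using Q(2) by (auto simp: Dc_def)
  have Nd: "N d > 0" "\<bar>xu d\<bar> \<ge> \<kappa>0 * N d" "\<bar>xs d\<bar> \<ge> \<kappa>0 * N d" using Dset_props[OF dt(1)] by auto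
  have Mv0: "M v \<ge> 0" by (rule M_nonneg)
  define r where "r = (pP v - t *\<^sub>R d) + xl v *\<^sub>R l0"
  have v: "v = t *\<^sub>R d + r" using ldec[of v] by (simp add: r_def algebra_simps)
  have "norm r \<le> norm (pP v - t *\<^sub>R d) + \<bar>xl v\<bar> * norm l0"
    using norm_triangle_ineq[of "pP v - t *\<^sub>R d" "xl v *\<^sub>R l0"] by (simp add: r_def)
  also have "\<dots> \<le> \<epsilon> * M v + (\<delta> * M v) * norm l0"
    using dt(2) N_ge[of "pP v - t *\<^sub>R d"] Q(1) by (intro add_mono mult_right_mono) auto
  also have "\<dots> \<le> \<epsilon> * M v + \<epsilon> * M v"
  proof -
    have "(\<delta> * M v) * norm l0 = (norm l0 * \<delta>) * M v" by (simp add: algebra_simps)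
    also have "\<dots> \<le> \<epsilon> * M v" by (rule mult_right_mono[OF e(5) Mv0])
    finally show ?thesis by simp
  qed
  finally have nr1: "norm r \<le> 2 * \<epsilon> * M v" by simp
  have "M v = N (t *\<^sub>R d + (pP v - t *\<^sub>R d))" by (simp add: M_def)
  also have "\<dots> \<le> \<bar>t\<bar> * N d + \<epsilon> * M v" using N_add[of "t *\<^sub>R d" "pP v - t *\<^sub>R d"] dt(2) by (simp add: N_scale)
  finally have "M v \<le> \<bar>t\<bar> * N d + \<epsilon> * M v" .
  moreover have "(4 * \<epsilon>) * M v \<le> 1 * M v" using e(2) Mv0 by (intro mult_right_mono) auto
  then have "\<epsilon> * M v \<le> M v / 4" by simp
  moreover have "\<bar>t\<bar> * N d \<ge> 0" using Nd(1) by simp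
  ultimately have Mv: "M v \<le> 2 * (\<bar>t\<bar> * N d)" by linarith
  have "norm r \<le> 2 * \<epsilon> * (2 * (\<bar>t\<bar> * N d))"
    using nr1 Mv e(1) by (smt (verit, best) mult_left_mono)
  then have nr: "norm r \<le> (4 * \<epsilon> * N d) * \<bar>t\<bar>" by (simp add: algebra_simps)
  have eta: "0 \<le> 4 * \<epsilon> * N d" "4 * \<epsilon> * N d \<le> N d" using e Nd by auto
  have nd: "norm d \<le> N d" by (rule N_ge)
  have Keta: "K * (4 * \<epsilon> * N d) \<le> \<kappa>0 * N d / 2"
  proof -
    have "K * (4 * \<epsilon> * N d) = (8 * K * \<epsilon>) * N d / 2" by simp
    also have "\<dots> \<le> \<kappa>0 * N d / 2" using e(3) Nd(1) by (simp add: mult_right_mono)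
    finally show ?thesis .
  qed
  have rat: "\<kappa>0 / 4 \<le> X / (4 * N d)" if "X \<ge> \<kappa>0 * N d" for X
    using that Nd(1) by (simp add: field_simps)
  have "\<bar>xu v\<bar> \<ge> \<bar>xu d\<bar> / (4 * N d) * norm v"
  proof (rule near[OF v nr, where F="\<lambda>v. \<bar>xu v\<bar>" and Fe="\<bar>xu d\<bar>" and K=K])
    have "\<bar>xu v\<bar> = \<bar>t * xu d + xu r\<bar>" by (simp add: v x_lin_facts)
    also have "\<dots> \<ge> \<bar>t\<bar> * \<bar>xu d\<bar> - \<bar>xu r\<bar>" by (simp add: abs_mult[symmetric] abs_triangle_ineq4[of "t * xu d" "- xu r", simplified] )
    moreover have "\<bar>xu r\<bar> \<le> K * norm r" using K by blast
    ultimately show "\<bar>t\<bar> * \<bar>xu d\<bar> - K * norm r \<le> \<bar>xu v\<bar>" by linarith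
    show "K * (4 * \<epsilon> * N d) \<le> \<bar>xu d\<bar> / 2" using Keta Nd(2) by linarith
  qed (use eta nd K Nd in \<open>simp_all\<close>)
  then show "\<bar>xu v\<bar> \<ge> \<kappa>0 / 4 * norm v"
    using rat[OF Nd(2)] by (meson mult_right_mono norm_ge_zero order_trans)
  have "\<bar>xs v\<bar> \<ge> \<bar>xs d\<bar> / (4 * N d) * norm v"
  proof (rule near[OF v nr, where F="\<lambda>v. \<bar>xs v\<bar>" and Fe="\<bar>xs d\<bar>" and K=K])
    have "\<bar>xs v\<bar> = \<bar>t * xs d + xs r\<bar>" by (simp add: v x_lin_facts)
    also have "\<dots> \<ge> \<bar>t\<bar> * \<bar>xs d\<bar> - \<bar>xs r\<bar>" by (simp add: abs_mult[symmetric] abs_triangle_ineq4[of "t * xs d" "- xs r", simplified] )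
    moreover have "\<bar>xs r\<bar> \<le> K * norm r" using K by blast
    ultimately show "\<bar>t\<bar> * \<bar>xs d\<bar> - K * norm r \<le> \<bar>xs v\<bar>" by linarith
    show "K * (4 * \<epsilon> * N d) \<le> \<bar>xs d\<bar> / 2" using Keta Nd(3) by linarith
  qed (use eta nd K Nd in \<open>simp_all\<close>)
  then show "\<bar>xs v\<bar> \<ge> \<kappa>0 / 4 * norm v"
    using rat[OF Nd(3)] by (meson mult_right_mono norm_ge_zero order_trans)
  have "norm v \<le> norm (pP v) + \<bar>xl v\<bar> * norm l0"
    using ldec[of v] norm_triangle_ineq[of "pP v" "xl v *\<^sub>R l0"] by simp
  also have "\<dots> \<le> M v + (\<delta> * M v) * norm l0"
    using norm_le_M[of v] Q(1) by (intro add_mono mult_right_mono) auto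
  finally have nv1: "norm v \<le> M v + (\<delta> * M v) * norm l0" .
  have nv2: "(\<delta> * M v) * norm l0 \<le> \<epsilon> * M v"
  proof -
    have "(\<delta> * M v) * norm l0 = (norm l0 * \<delta>) * M v" by (simp add: algebra_simps)
    also have "\<dots> \<le> \<epsilon> * M v" by (rule mult_right_mono[OF e(5) Mv0])
    finally show ?thesis .
  qed
  have nv3: "\<epsilon> * M v \<le> M v / 4" using \<open>(4 * \<epsilon>) * M v \<le> 1 * M v\<close> by simp
  show "M v \<ge> 1 / 2 * norm v" using nv1 nv2 nv3 Mv0 by linarith
qed

end


lemma map_gen:
  fixes ya yb yc :: "vec3 \<Rightarrow> real" and w v :: vec3
  assumes e: "ya w = \<alpha> * ya v" "yb w = \<beta>b * yb v" "yc w = \<beta>c * yc v"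
    and b: "\<bar>\<beta>b\<bar> \<le> \<gamma>" "\<bar>\<beta>c\<bar> \<le> \<gamma>"
    and K: "\<bar>yb v\<bar> \<le> K * norm v" "\<bar>yc v\<bar> \<le> K * norm v" "\<bar>ya w\<bar> \<le> K * norm w" "K > 0"
    and d: "0 \<le> \<delta>" "2 * K * \<gamma> \<le> \<delta> * \<kappa> * \<bar>\<alpha>\<bar>" "2 * K \<le> \<kappa> * \<bar>\<alpha>\<bar>"
    and lb: "\<bar>ya v\<bar> \<ge> \<kappa> * norm v"
  shows "\<bar>yb w\<bar> + \<bar>yc w\<bar> \<le> \<delta> * \<bar>ya w\<bar>" "norm w \<ge> 2 * norm v"
proof -
  have g0: "\<gamma> \<ge> 0" using b by linarith
  have "\<bar>yb w\<bar> \<le> \<gamma> * (K * norm v)"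
    using e(2) b(1) K(1) g0 by (simp add: abs_mult mult_mono)
  moreover have "\<bar>yc w\<bar> \<le> \<gamma> * (K * norm v)"
    using e(3) b(2) K(2) g0 by (simp add: abs_mult mult_mono)
  ultimately have "\<bar>yb w\<bar> + \<bar>yc w\<bar> \<le> (2 * K * \<gamma>) * norm v" by (simp add: algebra_simps)
  also have "\<dots> \<le> (\<delta> * \<kappa> * \<bar>\<alpha>\<bar>) * norm v" using d(2) by (simp add: mult_right_mono)
  also have "\<dots> = (\<delta> * \<bar>\<alpha>\<bar>) * (\<kappa> * norm v)" by (simp add: algebra_simps)
  also have "\<dots> \<le> (\<delta> * \<bar>\<alpha>\<bar>) * \<bar>ya v\<bar>" using lb d(1) by (simp add: mult_left_mono)
  also have "\<dots> = \<delta> * \<bar>ya w\<bar>" using e(1) by (simp add: abs_mult)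
  finally show "\<bar>yb w\<bar> + \<bar>yc w\<bar> \<le> \<delta> * \<bar>ya w\<bar>" .
  have "K * (2 * norm v) = (2 * K) * norm v" by simp
  also have "\<dots> \<le> (\<kappa> * \<bar>\<alpha>\<bar>) * norm v" using d(3) by (simp add: mult_right_mono)
  also have "\<dots> = \<bar>\<alpha>\<bar> * (\<kappa> * norm v)" by simp
  also have "\<dots> \<le> \<bar>\<alpha>\<bar> * \<bar>ya v\<bar>" using lb by (simp add: mult_left_mono)
  also have "\<dots> = \<bar>ya w\<bar>" using e(1) by (simp add: abs_mult)
  also have "\<dots> \<le> K * norm w" by (rule K(3))
  finally show "norm w \<ge> 2 * norm v" using K(4) by simp
qed

context S2 begin

lemma mapA:
  assumes K: "\<forall>v. \<bar>xu v\<bar> \<le> K * norm v \<and> \<bar>xc v\<bar> \<le> K * norm v \<and> \<bar>xs v\<bar> \<le> K * norm v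
             \<and> \<bar>xl v\<bar> \<le> K * norm v \<and> M v \<le> K * norm v" "K > 0"
    and d: "0 \<le> \<delta>" "2 * K * \<bar>ac\<bar> ^ n \<le> \<delta> * \<kappa> * \<bar>au\<bar> ^ n" "2 * K \<le> \<kappa> * \<bar>au\<bar> ^ n"
    and lb: "\<bar>xu v\<bar> \<ge> \<kappa> * norm v"
  shows "\<bar>xc (mpow f n *v v)\<bar> + \<bar>xs (mpow f n *v v)\<bar> \<le> \<delta> * \<bar>xu (mpow f n *v v)\<bar>"
    "norm (mpow f n *v v) \<ge> 2 * norm v"
proof -
  have b1: "\<bar>ac ^ n\<bar> \<le> \<bar>ac\<bar> ^ n" by (simp add: power_abs)
  have b2: "\<bar>as ^ n\<bar> \<le> \<bar>ac\<bar> ^ n" using moduli by (simp add: power_abs power_mono)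
  have k1: "\<bar>xc v\<bar> \<le> K * norm v" "\<bar>xs v\<bar> \<le> K * norm v" "\<bar>xu (mpow f n *v v)\<bar> \<le> K * norm (mpow f n *v v)"
    using K(1) by blast+
  have d2: "2 * K * \<bar>ac\<bar> ^ n \<le> \<delta> * \<kappa> * \<bar>au ^ n\<bar>" "2 * K \<le> \<kappa> * \<bar>au ^ n\<bar>"
    using d by (simp_all add: power_abs)
  note m = map_gen[OF fpow(1) fpow(2) fpow(3) b1 b2 k1 K(2) d(1) d2 lb]
  show "\<bar>xc (mpow f n *v v)\<bar> + \<bar>xs (mpow f n *v v)\<bar> \<le> \<delta> * \<bar>xu (mpow f n *v v)\<bar>" by (rule m(1))
  show "norm (mpow f n *v v) \<ge> 2 * norm v" by (rule m(2))
qed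

lemma mapAi:
  assumes K: "\<forall>v. \<bar>xu v\<bar> \<le> K * norm v \<and> \<bar>xc v\<bar> \<le> K * norm v \<and> \<bar>xs v\<bar> \<le> K * norm v
             \<and> \<bar>xl v\<bar> \<le> K * norm v \<and> M v \<le> K * norm v" "K > 0"
    and A: "mpow f n ** A = mat 1"
    and d: "0 \<le> \<delta>" "2 * K * \<bar>1 / ac\<bar> ^ n \<le> \<delta> * \<kappa> * \<bar>1 / as\<bar> ^ n" "2 * K \<le> \<kappa> * \<bar>1 / as\<bar> ^ n"
    and lb: "\<bar>xs v\<bar> \<ge> \<kappa> * norm v"
  shows "\<bar>xc (A *v v)\<bar> + \<bar>xu (A *v v)\<bar> \<le> \<delta> * \<bar>xs (A *v v)\<bar>"
    "norm (A *v v) \<ge> 2 * norm v"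
proof -
  have "\<bar>1 / au\<bar> \<le> \<bar>1 / ac\<bar>" using moduli ac_nz
    by (simp add: frac_le abs_divide)
  then have b2: "\<bar>(1 / au) ^ n\<bar> \<le> \<bar>1 / ac\<bar> ^ n" by (simp add: power_abs power_mono del: abs_divide)
  have b1: "\<bar>(1 / ac) ^ n\<bar> \<le> \<bar>1 / ac\<bar> ^ n" by (simp add: power_abs del: abs_divide)
  have k1: "\<bar>xc v\<bar> \<le> K * norm v" "\<bar>xu v\<bar> \<le> K * norm v" "\<bar>xs (A *v v)\<bar> \<le> K * norm (A *v v)"
    using K(1) by blast+
  have d2: "2 * K * \<bar>1 / ac\<bar> ^ n \<le> \<delta> * \<kappa> * \<bar>(1 / as) ^ n\<bar>" "2 * K \<le> \<kappa> * \<bar>(1 / as) ^ n\<bar>"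
    using d by (simp_all add: power_abs del: abs_divide)
  note m = map_gen[OF finv(3)[OF A] finv(2)[OF A] finv(1)[OF A] b1 b2 k1 K(2) d(1) d2 lb]
  show "\<bar>xc (A *v v)\<bar> + \<bar>xu (A *v v)\<bar> \<le> \<delta> * \<bar>xs (A *v v)\<bar>" by (rule m(1))
  show "norm (A *v v) \<ge> 2 * norm v" by (rule m(2))
qed

lemma mapB:
  assumes K: "\<forall>v. \<bar>xu v\<bar> \<le> K * norm v \<and> \<bar>xc v\<bar> \<le> K * norm v \<and> \<bar>xs v\<bar> \<le> K * norm v
             \<and> \<bar>xl v\<bar> \<le> K * norm v \<and> M v \<le> K * norm v" "K > 0"
    and d: "0 \<le> \<delta>" "0 \<le> \<epsilon>" "K \<le> \<delta> * \<kappa> * ((\<nu>^2) ^ n * \<nu> ^ n)" "2 * K \<le> \<kappa> * \<nu> ^ n"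
    and lb: "M v \<ge> \<kappa> * norm v" "Dc \<epsilon> v"
  shows "\<bar>xl (mpow g n *v v)\<bar> \<le> \<delta> * M (mpow g n *v v)" "Dc \<epsilon> (mpow g n *v v)"
    "norm (mpow g n *v v) \<ge> 2 * norm v"
proof -
  have np: "(\<nu>^2) ^ n > 0" "\<nu> ^ n > 0" using nu by auto
  have "\<bar>xl (mpow g n *v v)\<bar> = \<bar>xl v\<bar> / (\<nu>^2) ^ n" by (rule xl_gpow)
  also have "\<dots> \<le> K * norm v / (\<nu>^2) ^ n" using K np by (simp add: divide_right_mono)
  also have "\<dots> \<le> \<delta> * \<kappa> * \<nu> ^ n * norm v"
  proof -
    have "K * norm v \<le> (\<delta> * \<kappa> * ((\<nu>^2) ^ n * \<nu> ^ n)) * norm v" using d(3) by (simp add: mult_right_mono)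
    then show ?thesis using np by (simp add: divide_le_eq algebra_simps)
  qed
  also have "\<dots> = (\<delta> * \<nu> ^ n) * (\<kappa> * norm v)" by (simp add: algebra_simps)
  also have "\<dots> \<le> (\<delta> * \<nu> ^ n) * M v" using lb(1) d(1) np by (simp add: mult_left_mono)
  also have "\<dots> = \<delta> * M (mpow g n *v v)" by (simp add: M_gpow)
  finally show "\<bar>xl (mpow g n *v v)\<bar> \<le> \<delta> * M (mpow g n *v v)" .
  show "Dc \<epsilon> (mpow g n *v v)" by (rule Dc_gpow[OF lb(2) d(2)])
  have "K * (2 * norm v) = (2 * K) * norm v" by simp
  also have "\<dots> \<le> (\<kappa> * \<nu> ^ n) * norm v" using d(4) by (simp add: mult_right_mono)
  also have "\<dots> = \<nu> ^ n * (\<kappa> * norm v)" by simp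
  also have "\<dots> \<le> \<nu> ^ n * M v" using lb(1) np by (simp add: mult_left_mono)
  also have "\<dots> = M (mpow g n *v v)" by (simp add: M_gpow)
  also have "\<dots> \<le> K * norm (mpow g n *v v)" using K by blast
  finally show "norm (mpow g n *v v) \<ge> 2 * norm v" using K(2) by simp
qed

lemma mapBi:
  assumes K: "\<forall>v. \<bar>xu v\<bar> \<le> K * norm v \<and> \<bar>xc v\<bar> \<le> K * norm v \<and> \<bar>xs v\<bar> \<le> K * norm v
             \<and> \<bar>xl v\<bar> \<le> K * norm v \<and> M v \<le> K * norm v" "K > 0"
    and A: "mpow g n ** A = mat 1"
    and d: "0 \<le> \<delta>" "K \<le> \<delta> * \<kappa> * ((\<nu>^2) ^ n * \<nu> ^ n)" "2 * K \<le> \<kappa> * (\<nu>^2) ^ n"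
    and lb: "\<bar>xl v\<bar> \<ge> \<kappa> * norm v"
  shows "M (A *v v) \<le> \<delta> * \<bar>xl (A *v v)\<bar>" "norm (A *v v) \<ge> 2 * norm v"
proof -
  have np: "(\<nu>^2) ^ n > 0" "\<nu> ^ n > 0" using nu by auto
  have "M (A *v v) = M v / \<nu> ^ n" by (rule M_ginv[OF A])
  also have "\<dots> \<le> K * norm v / \<nu> ^ n" using K np by (simp add: divide_right_mono)
  also have "\<dots> \<le> \<delta> * \<kappa> * (\<nu>^2) ^ n * norm v"
  proof -
    have "K * norm v \<le> (\<delta> * \<kappa> * ((\<nu>^2) ^ n * \<nu> ^ n)) * norm v" using d(2) by (simp add: mult_right_mono)
    then show ?thesis using np by (simp add: divide_le_eq algebra_simps)
  qed
  also have "\<dots> = (\<delta> * (\<nu>^2) ^ n) * (\<kappa> * norm v)" by (simp add: algebra_simps)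
  also have "\<dots> \<le> (\<delta> * (\<nu>^2) ^ n) * \<bar>xl v\<bar>" using lb d(1) np by (simp add: mult_left_mono)
  also have "\<dots> = \<delta> * \<bar>xl (A *v v)\<bar>" by (simp add: xl_ginv[OF A])
  finally show "M (A *v v) \<le> \<delta> * \<bar>xl (A *v v)\<bar>" .
  have "K * (2 * norm v) = (2 * K) * norm v" by simp
  also have "\<dots> \<le> (\<kappa> * (\<nu>^2) ^ n) * norm v" using d(3) by (simp add: mult_right_mono)
  also have "\<dots> = (\<nu>^2) ^ n * (\<kappa> * norm v)" by simp
  also have "\<dots> \<le> (\<nu>^2) ^ n * \<bar>xl v\<bar>" using lb np by (simp add: mult_left_mono)
  also have "\<dots> = \<bar>xl (A *v v)\<bar>" by (simp add: xl_ginv[OF A])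
  also have "\<dots> \<le> K * norm (A *v v)" using K by blast
  finally show "norm (A *v v) \<ge> 2 * norm v" using K(2) by simp
qed

end


lemma ev_lt: "0 < D \<Longrightarrow> \<forall>\<^sub>F x in at_right (0::real). C * x < D"
  by (rule ev_small)

lemma ev_lt1: "0 < D \<Longrightarrow> \<forall>\<^sub>F x in at_right (0::real). x < D"
  using ev_small[of D 1] by simp

context S2 begin

lemma w_facts:
  defines "t0 \<equiv> 1 + 1 / \<bar>xu l0\<bar> + \<bar>xl eu\<bar>"
  defines "w \<equiv> eu + t0 *\<^sub>R l0"
  shows "xu w \<noteq> 0" "xs w \<noteq> 0" "xl w \<noteq> 0" "pP w = pu" "M w = N pu" "w \<noteq> 0"
proof -
  have a: "\<bar>xu l0\<bar> > 0" using xu_l0 by simp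
  have t0p: "t0 > 0" unfolding t0_def using a by (smt (verit, best) abs_ge_zero divide_pos_pos)
  have "t0 * \<bar>xu l0\<bar> = \<bar>xu l0\<bar> + 1 + \<bar>xl eu\<bar> * \<bar>xu l0\<bar>" unfolding t0_def using a by (simp add: field_simps)
  moreover have "\<bar>xl eu\<bar> * \<bar>xu l0\<bar> \<ge> 0" by simp
  ultimately have t1: "t0 * \<bar>xu l0\<bar> > 1" using a by linarith
  have xuw: "xu w = 1 + t0 * xu l0" by (simp add: w_def x_lin_facts x_eu)
  show "xu w \<noteq> 0"
  proof (cases "xu l0 > 0")
    case True then have "t0 * xu l0 > 0" using t0p by simp
    then show ?thesis using xuw by linarith
  next
    case False then have "xu l0 = - \<bar>xu l0\<bar>" by simp
    then have "xu w = 1 - t0 * \<bar>xu l0\<bar>" using xuw by (metis mult_minus_right uminus_add_conv_diff add.commute)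
    then show ?thesis using t1 by simp
  qed
  show "xs w \<noteq> 0" using t0p xs_l0 by (simp add: w_def x_lin_facts x_eu)
  have "1 / \<bar>xu l0\<bar> > 0" using a by simp
  then have "t0 > \<bar>xl eu\<bar>" unfolding t0_def by linarith
  then show "xl w \<noteq> 0" by (simp add: w_def l_lin_facts xl_l0)
  show pw: "pP w = pu" by (simp add: w_def l_lin_facts xl_l0 pu_def)
  then show "M w = N pu" by (simp add: M_def)
  show "w \<noteq> 0" using \<open>xs w \<noteq> 0\<close> by (auto simp: x_lin_facts)
qed

lemma main_S2: "\<exists>n0. \<forall>n>n0. cond_star {mpow f n, matrix_inv (mpow f n), mpow g n, matrix_inv (mpow g n)}"
proof -
  obtain K where KK: "K > 0" and Kall: "\<forall>v. \<bar>xu v\<bar> \<le> K * norm v \<and> \<bar>xc v\<bar> \<le> K * norm v \<and> \<bar>xs v\<bar> \<le> K * norm v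
             \<and> \<bar>xl v\<bar> \<le> K * norm v \<and> M v \<le> K * norm v" using Kconst by blast
  have Kb: "\<bar>xu v\<bar> \<le> K * norm v" "\<bar>xc v\<bar> \<le> K * norm v" "\<bar>xs v\<bar> \<le> K * norm v"
     "\<bar>xl v\<bar> \<le> K * norm v" "M v \<le> K * norm v" for v using Kall by blast+
  define Kr where "Kr = norm eu + norm ec + norm es"
  have Kr0: "Kr \<ge> 0" by (simp add: Kr_def)
  define t0 where "t0 = 1 + 1 / \<bar>xu l0\<bar> + \<bar>xl eu\<bar>"
  define w where "w = eu + t0 *\<^sub>R l0"
  note wf = w_facts[folded t0_def, folded w_def]
  have nw: "norm w > 0" using wf(6) by simp
  have Mw: "M w > 0" using wf(5) Npu_pos by simp
  have xuw: "\<bar>xu w\<bar> > 0" and xsw: "\<bar>xs w\<bar> > 0" and xlw: "\<bar>xl w\<bar> > 0" using wf by auto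
  have nz: "norm eu > 0" "norm es > 0" "norm l0 > 0" by (rule eu_nz_norm)+
  have xle: "\<bar>xl eu\<bar> > 0" "\<bar>xl es\<bar> > 0" using xl_eu xl_es by auto
  have xl0: "\<bar>xu l0\<bar> > 0" "\<bar>xs l0\<bar> > 0" using xu_l0 xs_l0 by auto
  have Np: "N pu > 0" "N ps > 0" by (rule Npu_pos)+
  have k0: "\<kappa>0 > 0" by (rule kappa0_pos)
  have q4: "(0::real) < 1/4" by simp
  have "\<forall>\<^sub>F x in at_right (0::real). 0 < x \<and> x < 1/4 \<and> (8 * K) * x < \<kappa>0"
    using ev_pos ev_lt1[OF q4] ev_lt[OF k0, of "8 * K"] by eventually_elim auto
  then obtain \<epsilon> where ep: "0 < \<epsilon>" "\<epsilon> < 1/4" "(8 * K) * \<epsilon> < \<kappa>0" using ev_obtain by blast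
  have "\<forall>\<^sub>F x in at_right (0::real). 0 < x \<and> norm l0 * x < \<epsilon> \<and> M w * x < \<bar>xl w\<bar>"
    using ev_pos ev_lt[OF ep(1), of "norm l0"] ev_lt[OF xlw, of "M w"] by eventually_elim auto
  then obtain \<delta>b where db: "0 < \<delta>b" "norm l0 * \<delta>b < \<epsilon>" "M w * \<delta>b < \<bar>xl w\<bar>" using ev_obtain by blast
  have h2: "\<bar>xu l0\<bar> / 2 > 0" "\<bar>xs l0\<bar> / 2 > 0" using xl0 by auto
  have "\<forall>\<^sub>F x in at_right (0::real). 0 < x \<and> K * x < \<bar>xu l0\<bar> / 2 \<and> K * x < \<bar>xs l0\<bar> / 2
       \<and> x < norm l0 \<and> \<bar>xl w\<bar> * x < M w \<and> \<delta>b * x < 1"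
    using ev_pos ev_lt[OF h2(1), of K] ev_lt[OF h2(2), of K] ev_lt1[OF nz(3)] ev_lt[OF Mw, of "\<bar>xl w\<bar>"]
      ev_lt[OF zero_less_one, of "\<delta>b"] by eventually_elim auto
  then obtain \<delta>bi where dbi: "0 < \<delta>bi" "K * \<delta>bi < \<bar>xu l0\<bar> / 2" "K * \<delta>bi < \<bar>xs l0\<bar> / 2"
       "\<delta>bi < norm l0" "\<bar>xl w\<bar> * \<delta>bi < M w" "\<delta>b * \<delta>bi < 1" using ev_obtain by blast
  have kp: "1 / (4 * norm eu) > 0" "\<bar>xl eu\<bar> / (4 * norm eu) > 0" "N pu / (4 * norm eu) > 0"
    "1 / (4 * norm es) > 0" "\<bar>xl es\<bar> / (4 * norm es) > 0" "N ps / (4 * norm es) > 0"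
    "\<kappa>0 / 4 > 0" "(1::real) / 2 > 0" "\<bar>xu l0\<bar> / (4 * norm l0) > 0" "\<bar>xs l0\<bar> / (4 * norm l0) > 0"
    "1 / (4 * norm l0) > 0" "\<bar>xu w\<bar> / norm w > 0" "\<bar>xs w\<bar> / norm w > 0" "\<bar>xl w\<bar> / norm w > 0"
    "M w / norm w > 0"
    using nz xle Np k0 xl0 xuw xsw xlw Mw nw by auto
  have "\<forall>\<^sub>F x in at_right (0::real). 0 < x \<and> x < 1 / (4 * norm eu) \<and> x < \<bar>xl eu\<bar> / (4 * norm eu)
     \<and> x < N pu / (4 * norm eu) \<and> x < 1 / (4 * norm es) \<and> x < \<bar>xl es\<bar> / (4 * norm es)
     \<and> x < N ps / (4 * norm es) \<and> x < \<kappa>0 / 4 \<and> x < 1 / 2 \<and> x < \<bar>xu l0\<bar> / (4 * norm l0)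
     \<and> x < \<bar>xs l0\<bar> / (4 * norm l0) \<and> x < 1 / (4 * norm l0) \<and> x < \<bar>xu w\<bar> / norm w
     \<and> x < \<bar>xs w\<bar> / norm w \<and> x < \<bar>xl w\<bar> / norm w \<and> x < M w / norm w"
    using ev_pos ev_lt1[OF kp(1)] ev_lt1[OF kp(2)] ev_lt1[OF kp(3)] ev_lt1[OF kp(4)] ev_lt1[OF kp(5)]
      ev_lt1[OF kp(6)] ev_lt1[OF kp(7)] ev_lt1[OF kp(8)] ev_lt1[OF kp(9)] ev_lt1[OF kp(10)]
      ev_lt1[OF kp(11)] ev_lt1[OF kp(12)] ev_lt1[OF kp(13)] ev_lt1[OF kp(14)] ev_lt1[OF kp(15)]
    by eventually_elim auto
  then obtain \<kappa> where ka: "0 < \<kappa>" "\<kappa> < 1 / (4 * norm eu)" "\<kappa> < \<bar>xl eu\<bar> / (4 * norm eu)"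
     "\<kappa> < N pu / (4 * norm eu)" "\<kappa> < 1 / (4 * norm es)" "\<kappa> < \<bar>xl es\<bar> / (4 * norm es)"
     "\<kappa> < N ps / (4 * norm es)" "\<kappa> < \<kappa>0 / 4" "\<kappa> < 1 / 2" "\<kappa> < \<bar>xu l0\<bar> / (4 * norm l0)"
     "\<kappa> < \<bar>xs l0\<bar> / (4 * norm l0)" "\<kappa> < 1 / (4 * norm l0)" "\<kappa> < \<bar>xu w\<bar> / norm w"
     "\<kappa> < \<bar>xs w\<bar> / norm w" "\<kappa> < \<bar>xl w\<bar> / norm w" "\<kappa> < M w / norm w"
    using ev_obtain by blast
  have dp: "\<bar>xl eu\<bar> / 2 > 0" "\<bar>xl es\<bar> / 2 > 0" "N pu / 2 > 0" "N ps / 2 > 0" "\<epsilon> * N pu / 2 > 0"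
     "\<epsilon> * N ps / 2 > 0" using xle Np ep by auto
  have "\<forall>\<^sub>F x in at_right (0::real). 0 < x \<and> Kr * x < norm eu \<and> Kr * x < norm es
     \<and> (K * Kr) * x < \<bar>xl eu\<bar> / 2 \<and> (K * Kr) * x < \<bar>xl es\<bar> / 2 \<and> (K * Kr) * x < N pu / 2
     \<and> (K * Kr) * x < N ps / 2 \<and> (K * Kr) * x < \<epsilon> * N pu / 2 \<and> (K * Kr) * x < \<epsilon> * N ps / 2
     \<and> K * x < \<kappa> \<and> \<bar>xu w\<bar> * x < \<bar>xs w\<bar> \<and> \<bar>xs w\<bar> * x < \<bar>xu w\<bar> \<and> x < 1"
    using ev_pos ev_lt[OF nz(1), of Kr] ev_lt[OF nz(2), of Kr] ev_lt[OF dp(1), of "K * Kr"]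
      ev_lt[OF dp(2), of "K * Kr"] ev_lt[OF dp(3), of "K * Kr"] ev_lt[OF dp(4), of "K * Kr"]
      ev_lt[OF dp(5), of "K * Kr"] ev_lt[OF dp(6), of "K * Kr"] ev_lt[OF ka(1), of K]
      ev_lt[OF xsw, of "\<bar>xu w\<bar>"] ev_lt[OF xuw, of "\<bar>xs w\<bar>"] ev_lt1[OF zero_less_one]
    by eventually_elim auto
  then obtain \<delta>a where da: "0 < \<delta>a" "Kr * \<delta>a < norm eu" "Kr * \<delta>a < norm es"
     "(K * Kr) * \<delta>a < \<bar>xl eu\<bar> / 2" "(K * Kr) * \<delta>a < \<bar>xl es\<bar> / 2" "(K * Kr) * \<delta>a < N pu / 2"
     "(K * Kr) * \<delta>a < N ps / 2" "(K * Kr) * \<delta>a < \<epsilon> * N pu / 2" "(K * Kr) * \<delta>a < \<epsilon> * N ps / 2"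
     "K * \<delta>a < \<kappa>" "\<bar>xu w\<bar> * \<delta>a < \<bar>xs w\<bar>" "\<bar>xs w\<bar> * \<delta>a < \<bar>xu w\<bar>" "\<delta>a < 1"
    using ev_obtain by blast
  define Qa where "Qa = (\<lambda>v. \<bar>xc v\<bar> + \<bar>xs v\<bar> \<le> \<delta>a * \<bar>xu v\<bar>)"
  define Qai where "Qai = (\<lambda>v. \<bar>xc v\<bar> + \<bar>xu v\<bar> \<le> \<delta>a * \<bar>xs v\<bar>)"
  define Qb where "Qb = (\<lambda>v. \<bar>xl v\<bar> \<le> \<delta>b * M v \<and> Dc \<epsilon> v)"
  define Qbi where "Qbi = (\<lambda>v. M v \<le> \<delta>bi * \<bar>xl v\<bar>)"
  have lowmono: "\<kappa> * norm v \<le> X" if "\<kappa> < c" "c * norm v \<le> X" for c X v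
  proof -
    have "\<kappa> * norm v \<le> c * norm v" using that(1) by (simp add: mult_right_mono)
    then show ?thesis using that(2) by linarith
  qed
  have La: "\<kappa> * norm v \<le> \<bar>xu v\<bar> \<and> \<kappa> * norm v \<le> \<bar>xl v\<bar> \<and> \<kappa> * norm v \<le> M v \<and> Dc \<epsilon> v" if "Qa v" for v
  proof -
    note L = La_lemma[OF Kall KK Kr_def da(1) _ _ _ _ _ that[unfolded Qa_def], where \<epsilon>=\<epsilon>]
    have l: "1 / (4 * norm eu) * norm v \<le> \<bar>xu v\<bar>" "\<bar>xl eu\<bar> / (4 * norm eu) * norm v \<le> \<bar>xl v\<bar>"
       "N pu / (4 * norm eu) * norm v \<le> M v" "Dc \<epsilon> v"
      by (rule L; use da ep in simp)+
    show ?thesis using lowmono[OF ka(2) l(1)] lowmono[OF ka(3) l(2)] lowmono[OF ka(4) l(3)] l(4) by blast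
  qed
  have Lai: "\<kappa> * norm v \<le> \<bar>xs v\<bar> \<and> \<kappa> * norm v \<le> \<bar>xl v\<bar> \<and> \<kappa> * norm v \<le> M v \<and> Dc \<epsilon> v" if "Qai v" for v
  proof -
    note L = Lai_lemma[OF Kall KK Kr_def da(1) _ _ _ _ _ that[unfolded Qai_def], where \<epsilon>=\<epsilon>]
    have l: "1 / (4 * norm es) * norm v \<le> \<bar>xs v\<bar>" "\<bar>xl es\<bar> / (4 * norm es) * norm v \<le> \<bar>xl v\<bar>"
       "N ps / (4 * norm es) * norm v \<le> M v" "Dc \<epsilon> v"
      by (rule L; use da ep in simp)+
    show ?thesis using lowmono[OF ka(5) l(1)] lowmono[OF ka(6) l(2)] lowmono[OF ka(7) l(3)] l(4) by blast
  qed
  have Lbi: "\<kappa> * norm v \<le> \<bar>xu v\<bar> \<and> \<kappa> * norm v \<le> \<bar>xs v\<bar> \<and> \<kappa> * norm v \<le> \<bar>xl v\<bar>" if "Qbi v" for v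
  proof -
    note L = Lbi_lemma[OF Kall KK dbi(1) _ _ _ that[unfolded Qbi_def]]
    have l: "\<bar>xu l0\<bar> / (4 * norm l0) * norm v \<le> \<bar>xu v\<bar>" "\<bar>xs l0\<bar> / (4 * norm l0) * norm v \<le> \<bar>xs v\<bar>"
       "1 / (4 * norm l0) * norm v \<le> \<bar>xl v\<bar>"
      by (rule L; use dbi in simp)+
    show ?thesis using lowmono[OF ka(10) l(1)] lowmono[OF ka(11) l(2)] lowmono[OF ka(12) l(3)] by blast
  qed
  have Lb: "\<kappa> * norm v \<le> \<bar>xu v\<bar> \<and> \<kappa> * norm v \<le> \<bar>xs v\<bar> \<and> \<kappa> * norm v \<le> M v \<and> Dc \<epsilon> v" if "Qb v" for v
  proof -
    have q: "\<bar>xl v\<bar> \<le> \<delta>b * M v" "Dc \<epsilon> v" using that by (auto simp: Qb_def)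
    note L = Lb_lemma[OF Kall KK ep(1) _ _ db(1) _ q]
    have l: "\<kappa>0 / 4 * norm v \<le> \<bar>xu v\<bar>" "\<kappa>0 / 4 * norm v \<le> \<bar>xs v\<bar>" "1 / 2 * norm v \<le> M v"
      by (rule L; use ep db in simp)+
    show ?thesis using lowmono[OF ka(8) l(1)] lowmono[OF ka(8) l(2)] lowmono[OF ka(9) l(3)] q(2) by blast
  qed
  have Lw: "\<kappa> * norm w \<le> \<bar>xu w\<bar>" "\<kappa> * norm w \<le> \<bar>xs w\<bar>" "\<kappa> * norm w \<le> \<bar>xl w\<bar>" "\<kappa> * norm w \<le> M w"
    using ka(13-16) nw by (simp_all add: less_divide_eq less_imp_le)
  have Dcw: "Dc \<epsilon> w"
  proof -
    have "N (pP w - 1 *\<^sub>R pu) = 0" using wf(4) by (simp add: N_def)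
    also have "\<dots> \<le> \<epsilon> * M w" using ep(1) M_nonneg by simp
    finally show ?thesis using pu_in(1) unfolding Dc_def by blast
  qed
  have hQa: "homog Qa"
    unfolding homog_def Qa_def
  proof (intro allI impI)
    fix v and r :: real assume q: "\<bar>xc v\<bar> + \<bar>xs v\<bar> \<le> \<delta>a * \<bar>xu v\<bar>"
    have "\<bar>r\<bar> * (\<bar>xc v\<bar> + \<bar>xs v\<bar>) \<le> \<bar>r\<bar> * (\<delta>a * \<bar>xu v\<bar>)" using q by (simp add: mult_left_mono)
    then show "\<bar>xc (r *\<^sub>R v)\<bar> + \<bar>xs (r *\<^sub>R v)\<bar> \<le> \<delta>a * \<bar>xu (r *\<^sub>R v)\<bar>"
      by (simp add: x_lin_facts abs_mult algebra_simps)
  qed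
  have hQai: "homog Qai"
    unfolding homog_def Qai_def
  proof (intro allI impI)
    fix v and r :: real assume q: "\<bar>xc v\<bar> + \<bar>xu v\<bar> \<le> \<delta>a * \<bar>xs v\<bar>"
    have "\<bar>r\<bar> * (\<bar>xc v\<bar> + \<bar>xu v\<bar>) \<le> \<bar>r\<bar> * (\<delta>a * \<bar>xs v\<bar>)" using q by (simp add: mult_left_mono)
    then show "\<bar>xc (r *\<^sub>R v)\<bar> + \<bar>xu (r *\<^sub>R v)\<bar> \<le> \<delta>a * \<bar>xs (r *\<^sub>R v)\<bar>"
      by (simp add: x_lin_facts abs_mult algebra_simps)
  qed
  have hQb: "homog Qb"
    unfolding homog_def Qb_def
  proof (intro allI impI, elim conjE, intro conjI)
    fix v and r :: real assume q: "\<bar>xl v\<bar> \<le> \<delta>b * M v" "Dc \<epsilon> v"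
    have "\<bar>r\<bar> * \<bar>xl v\<bar> \<le> \<bar>r\<bar> * (\<delta>b * M v)" using q by (simp add: mult_left_mono)
    then show "\<bar>xl (r *\<^sub>R v)\<bar> \<le> \<delta>b * M (r *\<^sub>R v)"
      by (simp add: l_lin_facts abs_mult M_scale algebra_simps)
    show "Dc \<epsilon> (r *\<^sub>R v)" by (rule Dc_scale[OF q(2)])
  qed
  have hQbi: "homog Qbi"
    unfolding homog_def Qbi_def
  proof (intro allI impI)
    fix v and r :: real assume q: "M v \<le> \<delta>bi * \<bar>xl v\<bar>"
    have "\<bar>r\<bar> * M v \<le> \<bar>r\<bar> * (\<delta>bi * \<bar>xl v\<bar>)" using q by (simp add: mult_left_mono)
    then show "M (r *\<^sub>R v) \<le> \<delta>bi * \<bar>xl (r *\<^sub>R v)\<bar>"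
      by (simp add: l_lin_facts abs_mult M_scale algebra_simps)
  qed
  have small: "v = 0" if "\<kappa> * norm v \<le> X" "X \<le> \<delta>a * (K * norm v)" for v X
  proof (rule ccontr)
    assume "v \<noteq> 0"
    then have nv: "norm v > 0" by simp
    have "\<delta>a * (K * norm v) = (K * \<delta>a) * norm v" by simp
    also have "\<dots> < \<kappa> * norm v" using da(10) nv by (simp add: mult_strict_right_mono)
    finally show False using that by linarith
  qed
  have dd1: "v = 0" if "Qa v" "Qai v" for v
  proof -
    have q: "\<bar>xc v\<bar> + \<bar>xs v\<bar> \<le> \<delta>a * \<bar>xu v\<bar>" "\<bar>xc v\<bar> + \<bar>xu v\<bar> \<le> \<delta>a * \<bar>xs v\<bar>"
      using that by (auto simp: Qa_def Qai_def)
    have "\<delta>a * (\<bar>xu v\<bar> + \<bar>xs v\<bar>) = \<delta>a * \<bar>xu v\<bar> + \<delta>a * \<bar>xs v\<bar>" by (simp add: algebra_simps)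
    then have us: "\<bar>xu v\<bar> + \<bar>xs v\<bar> \<le> \<delta>a * (\<bar>xu v\<bar> + \<bar>xs v\<bar>)" using q abs_ge_zero[of "xc v"] by linarith
    have "\<bar>xu v\<bar> + \<bar>xs v\<bar> = 0"
    proof (rule ccontr)
      assume "\<bar>xu v\<bar> + \<bar>xs v\<bar> \<noteq> 0"
      then have "\<bar>xu v\<bar> + \<bar>xs v\<bar> > 0" by simp
      then have "\<delta>a * (\<bar>xu v\<bar> + \<bar>xs v\<bar>) < 1 * (\<bar>xu v\<bar> + \<bar>xs v\<bar>)" using da(13) by (intro mult_strict_right_mono) auto
      then show False using us by simp
    qed
    then have "xu v = 0" "xs v = 0" by auto
    moreover then have "xc v = 0" using q by simp
    ultimately show ?thesis using xdec[of v] by simp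
  qed
  have dd2: "v = 0" if "Qa v" "Qb v" for v
  proof (rule small)
    show "\<kappa> * norm v \<le> \<bar>xs v\<bar>" using Lb[OF that(2)] by blast
    have "\<bar>xs v\<bar> \<le> \<delta>a * \<bar>xu v\<bar>" using that(1) by (simp add: Qa_def)
    also have "\<dots> \<le> \<delta>a * (K * norm v)" using Kb(1) da(1) by (simp add: mult_left_mono)
    finally show "\<bar>xs v\<bar> \<le> \<delta>a * (K * norm v)" .
  qed
  have dd3: "v = 0" if "Qa v" "Qbi v" for v
  proof (rule small)
    show "\<kappa> * norm v \<le> \<bar>xs v\<bar>" using Lbi[OF that(2)] by blast
    have "\<bar>xs v\<bar> \<le> \<delta>a * \<bar>xu v\<bar>" using that(1) by (simp add: Qa_def)
    also have "\<dots> \<le> \<delta>a * (K * norm v)" using Kb(1) da(1) by (simp add: mult_left_mono)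
    finally show "\<bar>xs v\<bar> \<le> \<delta>a * (K * norm v)" .
  qed
  have dd4: "v = 0" if "Qai v" "Qb v" for v
  proof (rule small)
    show "\<kappa> * norm v \<le> \<bar>xu v\<bar>" using Lb[OF that(2)] by blast
    have "\<bar>xu v\<bar> \<le> \<delta>a * \<bar>xs v\<bar>" using that(1) by (simp add: Qai_def)
    also have "\<dots> \<le> \<delta>a * (K * norm v)" using Kb(3) da(1) by (simp add: mult_left_mono)
    finally show "\<bar>xu v\<bar> \<le> \<delta>a * (K * norm v)" .
  qed
  have dd5: "v = 0" if "Qai v" "Qbi v" for v
  proof (rule small)
    show "\<kappa> * norm v \<le> \<bar>xu v\<bar>" using Lbi[OF that(2)] by blast
    have "\<bar>xu v\<bar> \<le> \<delta>a * \<bar>xs v\<bar>" using that(1) by (simp add: Qai_def)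
    also have "\<dots> \<le> \<delta>a * (K * norm v)" using Kb(3) da(1) by (simp add: mult_left_mono)
    finally show "\<bar>xu v\<bar> \<le> \<delta>a * (K * norm v)" .
  qed
  have dd6: "v = 0" if "Qb v" "Qbi v" for v
  proof -
    have q: "\<bar>xl v\<bar> \<le> \<delta>b * M v" "M v \<le> \<delta>bi * \<bar>xl v\<bar>" using that by (auto simp: Qb_def Qbi_def)
    have "\<delta>b * M v \<le> \<delta>b * (\<delta>bi * \<bar>xl v\<bar>)" using q(2) db(1) by (simp add: mult_left_mono)
    then have xx: "\<bar>xl v\<bar> \<le> (\<delta>b * \<delta>bi) * \<bar>xl v\<bar>" using q(1) by (simp add: mult.assoc)
    have "xl v = 0"
    proof (rule ccontr)
      assume "xl v \<noteq> 0"
      then have "(\<delta>b * \<delta>bi) * \<bar>xl v\<bar> < 1 * \<bar>xl v\<bar>" using dbi(6) by (intro mult_strict_right_mono) auto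
      then show False using xx by simp
    qed
    then have "M v \<le> 0" using q(2) by simp
    then have "norm (pP v) \<le> 0" using norm_le_M[of v] by linarith
    then have "pP v = 0" by simp
    then show ?thesis using ldec[of v] \<open>xl v = 0\<close> by simp
  qed
  have wn: "\<not> Qa w" "\<not> Qai w" "\<not> Qb w" "\<not> Qbi w"
  proof -
    show "\<not> Qa w" unfolding Qa_def using da(11) abs_ge_zero[of "xc w"] by (simp add: mult.commute)
    show "\<not> Qai w" unfolding Qai_def using da(12) abs_ge_zero[of "xc w"] by (simp add: mult.commute)
    show "\<not> Qb w" unfolding Qb_def using db(3) by (simp add: mult.commute)
    show "\<not> Qbi w" unfolding Qbi_def using dbi(5) by (simp add: mult.commute)
  qed
  have gq: "\<bar>au\<bar> / \<bar>ac\<bar> > 1" "\<bar>au\<bar> > 1" "\<bar>ac\<bar> / \<bar>as\<bar> > 1" "1 / \<bar>as\<bar> > 1" "\<nu> ^ 3 > 1" "\<nu> > 1" "\<nu> ^ 2 > 1"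
    using moduli ac_nz as_nz au_gt1 as_lt1 nu by (auto simp: one_less_power)
  have "\<forall>\<^sub>F n in sequentially. 2 * K / (\<delta>a * \<kappa>) \<le> (\<bar>au\<bar> / \<bar>ac\<bar>) ^ n \<and> 2 * K / \<kappa> \<le> \<bar>au\<bar> ^ n
     \<and> 2 * K / (\<delta>a * \<kappa>) \<le> (\<bar>ac\<bar> / \<bar>as\<bar>) ^ n \<and> 2 * K / \<kappa> \<le> (1 / \<bar>as\<bar>) ^ n
     \<and> K / (\<delta>b * \<kappa>) \<le> (\<nu> ^ 3) ^ n \<and> K / (\<delta>bi * \<kappa>) \<le> (\<nu> ^ 3) ^ n
     \<and> 2 * K / \<kappa> \<le> \<nu> ^ n \<and> 2 * K / \<kappa> \<le> (\<nu> ^ 2) ^ n"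
    using ev_grow[OF gq(1)] ev_grow[OF gq(2)] ev_grow[OF gq(3)] ev_grow[OF gq(4)]
      ev_grow[OF gq(5)] ev_grow[OF gq(5)] ev_grow[OF gq(6)] ev_grow[OF gq(7)]
    by eventually_elim auto
  then obtain N0 where N0: "\<And>n. n \<ge> N0 \<Longrightarrow> 2 * K / (\<delta>a * \<kappa>) \<le> (\<bar>au\<bar> / \<bar>ac\<bar>) ^ n \<and> 2 * K / \<kappa> \<le> \<bar>au\<bar> ^ n
     \<and> 2 * K / (\<delta>a * \<kappa>) \<le> (\<bar>ac\<bar> / \<bar>as\<bar>) ^ n \<and> 2 * K / \<kappa> \<le> (1 / \<bar>as\<bar>) ^ n
     \<and> K / (\<delta>b * \<kappa>) \<le> (\<nu> ^ 3) ^ n \<and> K / (\<delta>bi * \<kappa>) \<le> (\<nu> ^ 3) ^ n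
     \<and> 2 * K / \<kappa> \<le> \<nu> ^ n \<and> 2 * K / \<kappa> \<le> (\<nu> ^ 2) ^ n"
    by (auto simp: eventually_sequentially)
  show ?thesis
  proof (intro exI[of _ N0] allI impI)
    fix n assume "n > N0"
    then have G: "2 * K / (\<delta>a * \<kappa>) \<le> (\<bar>au\<bar> / \<bar>ac\<bar>) ^ n" "2 * K / \<kappa> \<le> \<bar>au\<bar> ^ n"
       "2 * K / (\<delta>a * \<kappa>) \<le> (\<bar>ac\<bar> / \<bar>as\<bar>) ^ n" "2 * K / \<kappa> \<le> (1 / \<bar>as\<bar>) ^ n"
       "K / (\<delta>b * \<kappa>) \<le> (\<nu> ^ 3) ^ n" "K / (\<delta>bi * \<kappa>) \<le> (\<nu> ^ 3) ^ n"
       "2 * K / \<kappa> \<le> \<nu> ^ n" "2 * K / \<kappa> \<le> (\<nu> ^ 2) ^ n" using N0[of n] by auto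
    have cv: "C * Q \<le> c * P" if "0 < P" "0 < Q" "0 < c" "C / c \<le> P / Q" for C Q c P :: real
      using that by (simp add: field_simps)
    have pa: "\<bar>au\<bar> ^ n > 0" "\<bar>ac\<bar> ^ n > 0" "\<bar>as\<bar> ^ n > 0" using ac_nz as_nz au_nz by auto
    have dk: "\<delta>a * \<kappa> > 0" "\<delta>b * \<kappa> > 0" "\<delta>bi * \<kappa> > 0" using da(1) db(1) dbi(1) ka(1) by auto
    have A1: "2 * K * \<bar>ac\<bar> ^ n \<le> \<delta>a * \<kappa> * \<bar>au\<bar> ^ n"
      using cv[OF pa(1) pa(2) dk(1)] G(1) by (simp add: power_divide)
    have A2: "2 * K \<le> \<kappa> * \<bar>au\<bar> ^ n" using cv[OF pa(1) zero_less_one ka(1)] G(2) by simp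
    have "2 * K * \<bar>as\<bar> ^ n \<le> \<delta>a * \<kappa> * \<bar>ac\<bar> ^ n"
      using cv[OF pa(2) pa(3) dk(1)] G(3) by (simp add: power_divide)
    then have Ai1: "2 * K * \<bar>1 / ac\<bar> ^ n \<le> \<delta>a * \<kappa> * \<bar>1 / as\<bar> ^ n"
      using pa by (simp add: power_divide field_simps)
    have Ai2: "2 * K \<le> \<kappa> * \<bar>1 / as\<bar> ^ n"
      using cv[OF _ zero_less_one ka(1), of "(1 / \<bar>as\<bar>) ^ n"] G(4) as_nz by (simp add: power_divide)
    have n3: "(\<nu> ^ 3) ^ n = (\<nu>^2) ^ n * \<nu> ^ n" by (simp add: power_mult_distrib[symmetric] power_add[symmetric] power_mult[symmetric] mult.commute)
    have np: "(\<nu> ^ 3) ^ n > 0" "\<nu> ^ n > 0" "(\<nu> ^ 2) ^ n > 0" using nu by auto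
    have B1: "K \<le> \<delta>b * \<kappa> * ((\<nu>^2) ^ n * \<nu> ^ n)"
      using cv[OF np(1) zero_less_one dk(2)] G(5) n3 by simp
    have Bi1: "K \<le> \<delta>bi * \<kappa> * ((\<nu>^2) ^ n * \<nu> ^ n)"
      using cv[OF np(1) zero_less_one dk(3)] G(6) n3 by simp
    have B2: "2 * K \<le> \<kappa> * \<nu> ^ n" using cv[OF np(2) zero_less_one ka(1)] G(7) by simp
    have Bi2: "2 * K \<le> \<kappa> * (\<nu>^2) ^ n" using cv[OF np(3) zero_less_one ka(1)] G(8) by simp
    define a where "a = mpow f n"
    define ai where "ai = matrix_inv a"
    define b where "b = mpow g n"
    define bi where "bi = matrix_inv b"
    have deta: "det a = 1" using f_SL by (simp add: a_def det_mpow SL3_def)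
    have detb: "det b = 1" using g_SL by (simp add: b_def det_mpow SL3_def)
    note ia = inv_props[OF deta, folded ai_def]
    note ib = inv_props[OF detb, folded bi_def]
    have mA: "Qa (a *v v) \<and> 2 * norm v \<le> norm (a *v v)" if "\<kappa> * norm v \<le> \<bar>xu v\<bar>" for v
      using mapA[OF Kall KK _ A1 A2 that] da(1) by (simp add: Qa_def a_def)
    have mAi: "Qai (ai *v v) \<and> 2 * norm v \<le> norm (ai *v v)" if "\<kappa> * norm v \<le> \<bar>xs v\<bar>" for v
      using mapAi[OF Kall KK ia(1)[unfolded a_def] _ Ai1 Ai2 that] da(1) by (simp add: Qai_def)
    have mB: "Qb (b *v v) \<and> 2 * norm v \<le> norm (b *v v)" if "\<kappa> * norm v \<le> M v" "Dc \<epsilon> v" for v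
      using mapB[OF Kall KK _ _ B1 B2 that] db(1) ep(1) by (simp add: Qb_def b_def)
    have mBi: "Qbi (bi *v v) \<and> 2 * norm v \<le> norm (bi *v v)" if "\<kappa> * norm v \<le> \<bar>xl v\<bar>" for v
      using mapBi[OF Kall KK ib(1)[unfolded b_def] _ Bi1 Bi2 that] dbi(1) by (simp add: Qbi_def)
    have "cond_star {a, ai, b, bi}"
    proof (rule pingpong[OF ia ib ai_def bi_def hQa hQai hQb hQbi, where w=w and c=2])
      show "\<And>v. Qa v \<Longrightarrow> Qai v \<Longrightarrow> v = 0" by (rule dd1)
      show "\<And>v. Qa v \<Longrightarrow> Qb v \<Longrightarrow> v = 0" by (rule dd2)
      show "\<And>v. Qa v \<Longrightarrow> Qbi v \<Longrightarrow> v = 0" by (rule dd3)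
      show "\<And>v. Qai v \<Longrightarrow> Qb v \<Longrightarrow> v = 0" by (rule dd4)
      show "\<And>v. Qai v \<Longrightarrow> Qbi v \<Longrightarrow> v = 0" by (rule dd5)
      show "\<And>v. Qb v \<Longrightarrow> Qbi v \<Longrightarrow> v = 0" by (rule dd6)
      show "w \<noteq> 0" by (rule wf(6))
      show "\<not> Qa w" "\<not> Qai w" "\<not> Qb w" "\<not> Qbi w" by (rule wn)+
      show "Qa (a *v w)" using mA[OF Lw(1)] by blast
      show "Qai (ai *v w)" using mAi[OF Lw(2)] by blast
      show "Qb (b *v w)" using mB[OF Lw(4) Dcw] by blast
      show "Qbi (bi *v w)" using mBi[OF Lw(3)] by blast
      show "Qa (a *v v) \<and> 2 * norm v \<le> norm (a *v v)" if "v \<noteq> 0" "Qa v \<or> Qb v \<or> Qbi v" for v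
        using that(2) La Lb Lbi mA by blast
      show "Qai (ai *v v) \<and> 2 * norm v \<le> norm (ai *v v)" if "v \<noteq> 0" "Qai v \<or> Qb v \<or> Qbi v" for v
        using that(2) Lai Lb Lbi mAi by blast
      show "Qb (b *v v) \<and> 2 * norm v \<le> norm (b *v v)" if "v \<noteq> 0" "Qb v \<or> Qa v \<or> Qai v" for v
        using that(2) La Lb Lai mB by blast
      show "Qbi (bi *v v) \<and> 2 * norm v \<le> norm (bi *v v)" if "v \<noteq> 0" "Qbi v \<or> Qa v \<or> Qai v" for v
        using that(2) La Lai Lbi mBi by blast
    qed simp
    then show "cond_star {mpow f n, matrix_inv (mpow f n), mpow g n, matrix_inv (mpow g n)}"
      by (simp add: a_def ai_def b_def bi_def)
  qed
qed

end


theorem mainTheorem12: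
  fixes f g :: mat3 and au ac as :: real and m :: nat and \<mu> :: real
  assumes f_SL: "f \<in> SL3" and g_SL: "g \<in> SL3"
    and Eu: "dim (eigsp f au) = 1" and Ec: "dim (eigsp f ac) = 1" and Es: "dim (eigsp f as) = 1"
    and moduli: "\<bar>au\<bar> > \<bar>ac\<bar>" "\<bar>ac\<bar> > \<bar>as\<bar>"
    and m_pos: "m > 0" and mu: "\<mu> > 1"
    and P0: "dim (eigsp (mpow g m) \<mu>) = 2"
    and L0: "dim (eigsp (mpow g m) (\<mu> powr (-2))) = 1"
    and cond3: "\<not> eigsp f au \<subseteq> eigsp (mpow g m) \<mu>"
               "\<not> eigsp f ac \<subseteq> eigsp (mpow g m) \<mu>"
               "\<not> eigsp f as \<subseteq> eigsp (mpow g m) \<mu>"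
               "\<not> eigsp (mpow g m) (\<mu> powr (-2)) \<subseteq> dsum (eigsp f au) (eigsp f ac)"
               "\<not> eigsp (mpow g m) (\<mu> powr (-2)) \<subseteq> dsum (eigsp f as) (eigsp f ac)"
    and cond4: "\<forall>k<m. \<not> act (mpow g k)
                   (dsum (eigsp f au) (eigsp (mpow g m) (\<mu> powr (-2))) \<inter> eigsp (mpow g m) \<mu>)
                 \<subseteq> dsum (eigsp f as) (eigsp f ac) \<union> dsum (eigsp f au) (eigsp f ac)"
               "\<forall>k<m. \<not> act (mpow g k)
                   (dsum (eigsp f as) (eigsp (mpow g m) (\<mu> powr (-2))) \<inter> eigsp (mpow g m) \<mu>)
                 \<subseteq> dsum (eigsp f as) (eigsp f ac) \<union> dsum (eigsp f au) (eigsp f ac)"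
  shows "\<exists>n0. \<forall>n>n0. cond_star {mpow f n, matrix_inv (mpow f n), mpow g n, matrix_inv (mpow g n)}"
proof -
  have s0: "S0 f g au ac as m \<mu>"
    unfolding S0_def using assms by blast
  obtain eu ec es xu xc xs where F:
     "f *v eu = au *\<^sub>R eu" "eu \<noteq> 0" "eigsp f au = span {eu}"
     "f *v ec = ac *\<^sub>R ec" "ec \<noteq> 0" "eigsp f ac = span {ec}"
     "f *v es = as *\<^sub>R es" "es \<noteq> 0" "eigsp f as = span {es}"
     "linear xu" "linear xc" "linear xs"
     "\<forall>a b c. xu (a *\<^sub>R eu + b *\<^sub>R ec + c *\<^sub>R es) = a \<and> xc (a *\<^sub>R eu + b *\<^sub>R ec + c *\<^sub>R es) = b
        \<and> xs (a *\<^sub>R eu + b *\<^sub>R ec + c *\<^sub>R es) = c"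
     "\<forall>v. v = xu v *\<^sub>R eu + xc v *\<^sub>R ec + xs v *\<^sub>R es"
    using S0.f_data[OF s0] by blast
  have s1: "S1 f g au ac as m \<mu> eu ec es xu xc xs"
    unfolding S1_def S1_axioms_def using s0 F by blast
  obtain l0 xl pP where G: "l0 \<noteq> 0" "mpow g m *v l0 = (\<mu> powr (-2)) *\<^sub>R l0"
     "eigsp (mpow g m) (\<mu> powr (-2)) = span {l0}" "linear xl" "linear pP"
     "\<forall>v. mpow g m *v pP v = \<mu> *\<^sub>R pP v" "\<forall>v. v = pP v + xl v *\<^sub>R l0"
     "\<forall>p t. mpow g m *v p = \<mu> *\<^sub>R p \<longrightarrow> pP (p + t *\<^sub>R l0) = p \<and> xl (p + t *\<^sub>R l0) = t"
    using S0.g_data[OF s0] by blast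
  have s2: "S2 f g au ac as m \<mu> eu ec es xu xc xs l0 xl pP"
    unfolding S2_def S2_axioms_def using s1 G by blast
  show ?thesis by (rule S2.main_S2[OF s2])
qed


end
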